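(* Let $\mathcal P^0,\mathcal P^1$ be typical cyclic $6$-configurations, and let $p^i\in\mathcal P^i$ be a dominant point of $\mathcal P^i$, $i=0,1$. Then there is a continuous family $\mathcal P^t$, $t\in[0,1]$, of typical $6$-configurations connecting $\mathcal P^0$ to $\mathcal P^1$, together with a continuous choice of points $p^t\in\mathcal P^t$, such that $p^t$ equals $p^0$ at $t=0$ and $p^1$ at $t=1$.
   Context: A $6$-configuration is a set of $6$ distinct points in $\mathbb{RP}^2$; it is typical if no three of its points are collinear and all six points do not lie on a common conic. A simple $6$-configuration is cyclic (hexagonal) if there is a line $\ell$ disjoint from it such that its points are the vertices of a convex hexagon in the affine plane $\mathbb{RP}^2\smallsetminus\ell$. For $p\in\mathcal P$ let $Q_p$ be the conic through the five points of $\mathcal P\smallsetminus\{p\}$; "inside" $Q_p$ means the component of $\mathbb{RP}^2\smallsetminus Q_p$ homeomorphic to a disc. The point $p$ is dominant if it lies outside $Q_p$. *)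

theory Defs
  imports "HOL-Analysis.Analysis" "HOL-Library.Numeral_Type"
begin

text \<open>Points of RP^2 are represented by nonzero vectors of real^3; the projective
  point of v is its class of nonzero multiples.  A 6-configuration is represented
  by an (ordered) 6-tuple of representatives.\<close>

type_synonym config = "(real^3)^6"

definition proj_class :: "real^3 \<Rightarrow> (real^3) set" where
  "proj_class v = {c *\<^sub>R v | c. c \<noteq> 0}"

definition config_points :: "config \<Rightarrow> (real^3) set set" where
  "config_points P = proj_class ` range (\<lambda>i. P $ i)"

definition lin_dep3 :: "real^3 \<Rightarrow> real^3 \<Rightarrow> real^3 \<Rightarrow> bool" where
  "lin_dep3 u v w \<longleftrightarrow>
     (\<exists>a b c. (a, b, c) \<noteq> (0, 0, 0) \<and> a *\<^sub>R u + b *\<^sub>R v + c *\<^sub>R w = 0)"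

definition simple_config :: "config \<Rightarrow> bool" where
  "simple_config P \<longleftrightarrow>
     (\<forall>i. P $ i \<noteq> 0) \<and>
     (\<forall>i j. i \<noteq> j \<longrightarrow> proj_class (P $ i) \<noteq> proj_class (P $ j)) \<and>
     (\<forall>i j k. i \<noteq> j \<and> j \<noteq> k \<and> i \<noteq> k \<longrightarrow> \<not> lin_dep3 (P $ i) (P $ j) (P $ k))"

definition quad :: "real^3^3 \<Rightarrow> real^3 \<Rightarrow> real" where
  "quad A v = v \<bullet> (A *v v)"

definition on_common_conic :: "(real^3) set \<Rightarrow> bool" where
  "on_common_conic S \<longleftrightarrow>
     (\<exists>A :: real^3^3. transpose A = A \<and> A \<noteq> 0 \<and> (\<forall>v\<in>S. quad A v = 0))"

definition typical_config :: "config \<Rightarrow> bool" where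
  "typical_config P \<longleftrightarrow> simple_config P \<and> \<not> on_common_conic (range (\<lambda>i. P $ i))"

text \<open>Cyclic: some line {v. a \<bullet> v = 0} misses all points and, in the affine chart
  {v. a \<bullet> v = 1}, the points are in convex position (i.e. they are the vertices of a
  convex hexagon, the points being distinct with no three collinear).\<close>
definition cyclic_config :: "config \<Rightarrow> bool" where
  "cyclic_config P \<longleftrightarrow> simple_config P \<and>
     (\<exists>a :: real^3.
        (\<forall>i. a \<bullet> (P $ i) \<noteq> 0) \<and>
        (let aff = (\<lambda>i. (1 / (a \<bullet> (P $ i))) *\<^sub>R (P $ i))
         in \<forall>i. aff i \<notin> convex hull (aff ` (UNIV - {i}))))"

text \<open>A point (represented by v) lies outside the nondegenerate conic {quad A = 0}:
  it is off the conic and the component of its lift u in S^2 minus the cone of the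
  conic contains the antipode -u.  (The disc component of RP^2 minus the conic lifts
  to two disjoint antipodal discs; the Moebius-band component lifts to a connected
  annulus.)\<close>
definition outside_conic :: "real^3^3 \<Rightarrow> real^3 \<Rightarrow> bool" where
  "outside_conic A v \<longleftrightarrow>
     quad A v \<noteq> 0 \<and>
     (let u = (1 / norm v) *\<^sub>R v
      in - u \<in> connected_component_set (sphere 0 1 - {w. quad A w = 0}) u)"

definition dominant :: "config \<Rightarrow> 6 \<Rightarrow> bool" where
  "dominant P i \<longleftrightarrow>
     (\<exists>A :: real^3^3. transpose A = A \<and> A \<noteq> 0 \<and>
        (\<forall>j. j \<noteq> i \<longrightarrow> quad A (P $ j) = 0) \<and> outside_conic A (P $ i))"

end

theory Submission
  imports Defs
begin



definition br :: "real^3 \<Rightarrow> real^3 \<Rightarrow> real^3 \<Rightarrow> real" where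
 "br x y z = x$1*(y$2*z$3 - y$3*z$2) - x$2*(y$1*z$3 - y$3*z$1) + x$3*(y$1*z$2 - y$2*z$1)"

definition lin :: "real^3 \<Rightarrow> real^3 \<Rightarrow> real^3 \<Rightarrow> real^3 \<Rightarrow> real^3" where
 "lin a b c y = y$1 *\<^sub>R a + y$2 *\<^sub>R b + y$3 *\<^sub>R c"

definition cramer :: "real^3 \<Rightarrow> real^3 \<Rightarrow> real^3 \<Rightarrow> real^3 \<Rightarrow> real^3" where
 "cramer a b c q = vector [br q b c / br a b c, br a q c / br a b c, br a b q / br a b c]"

lemma univ6: "(UNIV::6 set) = {0,1,2,3,4,5}"
proof -
  have "card (UNIV::6 set) = 6" by simp
  moreover have "{0,1,2,3,4,5::6} \<subseteq> UNIV" by simp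
  moreover have "card {0,1,2,3,4,5::6} = 6" by simp
  ultimately show ?thesis using card_subset_eq[of UNIV "{0,1,2,3,4,5::6}"] by simp
qed

lemma forall6: "(\<forall>i::6. P i) \<longleftrightarrow> P 0 \<and> P 1 \<and> P 2 \<and> P 3 \<and> P 4 \<and> P 5"
  by (metis UNIV_I insertCI insertE singletonD univ6)

lemma br_swap12: "br y x z = - br x y z" by (simp add: br_def algebra_simps)
lemma br_swap23: "br x z y = - br x y z" by (simp add: br_def algebra_simps)
lemma br_cyc: "br y z x = br x y z" by (simp add: br_def algebra_simps)
lemma br_same12[simp]: "br x x z = 0" by (simp add: br_def algebra_simps)
lemma br_same23[simp]: "br x z z = 0" by (simp add: br_def algebra_simps)
lemma br_same13[simp]: "br x z x = 0" by (simp add: br_def algebra_simps)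
lemma br_scale1: "br (r *\<^sub>R x) y z = r * br x y z" by (simp add: br_def algebra_simps)
lemma br_scale2: "br x (r *\<^sub>R y) z = r * br x y z" by (simp add: br_def algebra_simps)
lemma br_scale3: "br x y (r *\<^sub>R z) = r * br x y z" by (simp add: br_def algebra_simps)
lemma br_add1: "br (x + x') y z = br x y z + br x' y z" by (simp add: br_def algebra_simps)
lemma br_add2: "br x (y + y') z = br x y z + br x y' z" by (simp add: br_def algebra_simps)
lemma br_add3: "br x y (z + z') = br x y z + br x y z'" by (simp add: br_def algebra_simps)
lemma br_diff1: "br (x - x') y z = br x y z - br x' y z" by (simp add: br_def algebra_simps)
lemma br_diff2: "br x (y - y') z = br x y z - br x y' z" by (simp add: br_def algebra_simps)
lemma br_diff3: "br x y (z - z') = br x y z - br x y z'" by (simp add: br_def algebra_simps)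
lemma br_neg1: "br (- x) y z = - br x y z" by (simp add: br_def algebra_simps)
lemma br_neg2: "br x (- y) z = - br x y z" by (simp add: br_def algebra_simps)
lemma br_neg3: "br x y (- z) = - br x y z" by (simp add: br_def algebra_simps)
lemma br_zero1[simp]: "br 0 y z = 0" by (simp add: br_def)
lemma br_zero2[simp]: "br x 0 z = 0" by (simp add: br_def)
lemma br_zero3[simp]: "br x y 0 = 0" by (simp add: br_def)

lemma br_nz_perm: assumes "br x y z \<noteq> 0"
  shows "br y x z \<noteq> 0" "br x z y \<noteq> 0" "br y z x \<noteq> 0" "br z x y \<noteq> 0" "br z y x \<noteq> 0"
  using assms by (simp_all add: br_def algebra_simps)

lemma id4: "br y z q * (g \<bullet> x) - br x z q * (g \<bullet> y) + br x y q * (g \<bullet> z) - br x y z * (g \<bullet> q) = 0"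
  by (simp add: br_def inner_vec_def sum_3 algebra_simps)

lemma cramer_id: "br a b c *\<^sub>R q = br q b c *\<^sub>R a + br a q c *\<^sub>R b + br a b q *\<^sub>R c"
  by (simp add: vec_eq_iff forall_3 br_def algebra_simps)

lemma lin_cramer: assumes "br a b c \<noteq> 0" shows "lin a b c (cramer a b c q) = q"
proof -
  have "br a b c *\<^sub>R lin a b c (cramer a b c q) = br a b c *\<^sub>R q"
    using assms by (simp add: lin_def cramer_def cramer_id[of a b c q] scaleR_add_right)
  then show ?thesis using assms by simp
qed

lemma br_lin: "br (lin a b c x) (lin a b c y) (lin a b c z) = br a b c * br x y z"
  by (simp add: lin_def br_def algebra_simps)

lemma cramer_lin: assumes "br a b c \<noteq> 0" shows "cramer a b c (lin a b c y) = y"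
proof -
  have 1: "br (lin a b c y) b c = y$1 * br a b c" by (simp add: lin_def br_def algebra_simps)
  have 2: "br a (lin a b c y) c = y$2 * br a b c" by (simp add: lin_def br_def algebra_simps)
  have 3: "br a b (lin a b c y) = y$3 * br a b c" by (simp add: lin_def br_def algebra_simps)
  show ?thesis using assms by (simp add: cramer_def 1 2 3 vec_eq_iff forall_3)
qed

lemma lin_linear: "lin a b c (x + y) = lin a b c x + lin a b c y"
   "lin a b c (r *\<^sub>R x) = r *\<^sub>R lin a b c x"
  by (simp_all add: lin_def algebra_simps)

lemma lindep_br: assumes "lin_dep3 u v w" shows "br u v w = 0"
proof -
  obtain a b c where abc: "(a,b,c) \<noteq> (0,0,0)" and e: "a *\<^sub>R u + b *\<^sub>R v + c *\<^sub>R w = 0"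
    using assms unfolding lin_dep3_def by blast
  have "br (a *\<^sub>R u + b *\<^sub>R v + c *\<^sub>R w) v w = a * br u v w"
    by (simp add: br_add1 br_scale1)
  hence 1: "a * br u v w = 0" using e by simp
  have "br u (a *\<^sub>R u + b *\<^sub>R v + c *\<^sub>R w) w = b * br u v w"
    by (simp add: br_add2 br_scale2)
  hence 2: "b * br u v w = 0" using e by simp
  have "br u v (a *\<^sub>R u + b *\<^sub>R v + c *\<^sub>R w) = c * br u v w"
    by (simp add: br_add3 br_scale3)
  hence 3: "c * br u v w = 0" using e by simp
  show ?thesis using 1 2 3 abc by auto
qed

lemma br_lindep: assumes "br u v w = 0" shows "lin_dep3 u v w"
proof -
  define n1 where "n1 = v$2*w$3 - v$3*w$2"
  define n2 where "n2 = v$3*w$1 - v$1*w$3"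
  define n3 where "n3 = v$1*w$2 - v$2*w$1"
  show ?thesis
  proof (cases "n1 = 0 \<and> n2 = 0 \<and> n3 = 0")
    case False
    define a where "a = n1*n1 + n2*n2 + n3*n3"
    define b where "b = - ((u$2*w$3 - u$3*w$2)*n1 + (u$3*w$1 - u$1*w$3)*n2 + (u$1*w$2 - u$2*w$1)*n3)"
    define c where "c = - ((v$2*u$3 - v$3*u$2)*n1 + (v$3*u$1 - v$1*u$3)*n2 + (v$1*u$2 - v$2*u$1)*n3)"
    have "a \<noteq> 0" using False unfolding a_def
      by (metis add_nonneg_eq_0_iff zero_le_square mult_eq_0_iff add_nonneg_nonneg)
    moreover have "a *\<^sub>R u + b *\<^sub>R v + c *\<^sub>R w = br u v w *\<^sub>R vector [n1, n2, n3]"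
      by (simp add: vec_eq_iff forall_3 a_def b_def c_def n1_def n2_def n3_def br_def algebra_simps)
    ultimately show ?thesis using assms unfolding lin_dep3_def
      by (metis Pair_inject scale_zero_left)
  next
    case True
    show ?thesis
    proof (cases "v = 0")
      case True
      then show ?thesis unfolding lin_dep3_def
        by (rule_tac x=0 in exI, rule_tac x=1 in exI, rule_tac x=0 in exI) simp
    next
      case False
      have vv: "v \<bullet> v \<noteq> 0" using False by simp
      have "(v \<bullet> v) *\<^sub>R w - (v \<bullet> w) *\<^sub>R v = vector [v$3*n2 - v$2*n3, v$1*n3 - v$3*n1, v$2*n1 - v$1*n2]"
        by (simp add: vec_eq_iff forall_3 n1_def n2_def n3_def inner_vec_def sum_3 algebra_simps)
      also have "\<dots> = 0" using True by (simp add: vec_eq_iff forall_3)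
      finally have "0 *\<^sub>R u + (- (v \<bullet> w)) *\<^sub>R v + (v \<bullet> v) *\<^sub>R w = 0" by (simp add: algebra_simps)
      then show ?thesis unfolding lin_dep3_def using vv
        by (rule_tac x=0 in exI, rule_tac x="- (v \<bullet> w)" in exI, rule_tac x="v \<bullet> v" in exI) simp
    qed
  qed
qed

lemma lindep_iff: "lin_dep3 u v w \<longleftrightarrow> br u v w = 0"
  using lindep_br br_lindep by blast

lemma pc_scale: "c \<noteq> 0 \<Longrightarrow> proj_class (c *\<^sub>R v) = proj_class v"
proof -
  assume c: "c \<noteq> 0"
  show ?thesis unfolding proj_class_def
  proof (rule set_eqI, rule iffI)
    fix x assume "x \<in> {d *\<^sub>R c *\<^sub>R v |d. d \<noteq> 0}"
    then obtain d where "d \<noteq> 0" "x = d *\<^sub>R c *\<^sub>R v" by blast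
    then show "x \<in> {d *\<^sub>R v |d. d \<noteq> 0}" using c by (intro CollectI exI[of _ "d*c"]) simp
  next
    fix x assume "x \<in> {d *\<^sub>R v |d. d \<noteq> 0}"
    then obtain d where "d \<noteq> 0" "x = d *\<^sub>R v" by blast
    then show "x \<in> {d *\<^sub>R c *\<^sub>R v |d. d \<noteq> 0}" using c by (intro CollectI exI[of _ "d/c"]) simp
  qed
qed

lemma pc_eq: "proj_class u = proj_class v \<Longrightarrow> \<exists>c. c \<noteq> 0 \<and> u = c *\<^sub>R v"
proof -
  assume "proj_class u = proj_class v"
  moreover have "u \<in> proj_class u" unfolding proj_class_def by (rule CollectI, rule exI[of _ 1]) simp
  ultimately show ?thesis unfolding proj_class_def by auto
qed

lemma six_distinct: "(i::6) + 1 \<noteq> i" "(i::6) + 2 \<noteq> i" "(i::6) + 1 \<noteq> i + 2"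
  by (simp_all add: add.commute)

lemma typical_crit:
  fixes P :: config
  assumes B: "\<forall>i j k. i \<noteq> j \<and> j \<noteq> k \<and> i \<noteq> k \<longrightarrow> br (P$i) (P$j) (P$k) \<noteq> 0"
    and C: "\<not> on_common_conic (range (\<lambda>i. P$i))"
  shows "typical_config P"
proof -
  have nz: "P$i \<noteq> 0" for i
  proof
    assume "P$i = 0"
    moreover have "br (P$i) (P$(i+1)) (P$(i+2)) \<noteq> 0" using B six_distinct[of i] by metis
    ultimately show False by simp
  qed
  have dc: "proj_class (P$i) \<noteq> proj_class (P$j)" if "i \<noteq> j" for i j
  proof
    assume "proj_class (P$i) = proj_class (P$j)"
    then obtain c where c: "P$i = c *\<^sub>R P$j" using pc_eq by blast
    define k where "k = (if j = i + 1 then i + 2 else i + 1)"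
    have "k \<noteq> i" "k \<noteq> j" unfolding k_def using six_distinct[of i] by auto
    hence "br (P$i) (P$j) (P$k) \<noteq> 0" using B that by metis
    moreover have "br (P$i) (P$j) (P$k) = 0" using c by (simp add: br_scale1)
    ultimately show False by simp
  qed
  have nc: "\<not> lin_dep3 (P$i) (P$j) (P$k)" if "i \<noteq> j \<and> j \<noteq> k \<and> i \<noteq> k" for i j k
    using B that lindep_iff by blast
  show ?thesis unfolding typical_config_def simple_config_def using nz dc nc C by blast
qed

lemma typical_br:
  assumes "typical_config P" "i \<noteq> j" "j \<noteq> k" "i \<noteq> k"
  shows "br (P$i) (P$j) (P$k) \<noteq> 0"
  using assms unfolding typical_config_def simple_config_def lindep_iff by blast

definition bil :: "real^3^3 \<Rightarrow> real^3 \<Rightarrow> real^3 \<Rightarrow> real" where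
  "bil A x y = x \<bullet> (A *v y)"

lemma quad_bil: "quad A x = bil A x x" by (simp add: quad_def bil_def)

lemma bil_add1: "bil A (x + y) z = bil A x z + bil A y z" by (simp add: bil_def inner_add_left)
lemma bil_add2: "bil A x (y + z) = bil A x y + bil A x z"
  by (simp add: bil_def matrix_vector_right_distrib inner_add_right)
lemma bil_scale1: "bil A (r *\<^sub>R x) z = r * bil A x z" by (simp add: bil_def)
lemma bil_scale2: "bil A x (r *\<^sub>R z) = r * bil A x z"
  by (simp add: bil_def matrix_vector_mult_scaleR)
lemma bil_diff1: "bil A (x - y) z = bil A x z - bil A y z" by (simp add: bil_def inner_diff_left)
lemma bil_diff2: "bil A x (y - z) = bil A x y - bil A x z"
  by (simp add: bil_def matrix_vector_mult_diff_distrib inner_diff_right)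
lemma bil_neg1: "bil A (- x) z = - bil A x z" by (simp add: bil_def)
lemma bil_neg2: "bil A x (- z) = - bil A x z"
  by (metis bil_scale2 mult_minus1 scaleR_minus1_left)

lemmas bil_lin = bil_add1 bil_add2 bil_scale1 bil_scale2 bil_diff1 bil_diff2 bil_neg1 bil_neg2

lemma sym_entry: "transpose A = A \<Longrightarrow> A$i$j = A$j$i"
  by (metis transpose_def vec_lambda_beta)

lemma bil_sym: assumes "transpose A = A" shows "bil A x y = bil A y x"
proof -
  have s: "\<And>i j. A$i$j = A$j$i" using sym_entry[OF assms] by blast
  show ?thesis unfolding bil_def inner_vec_def matrix_vector_mult_def
    by (simp add: sum_3 algebra_simps s[of 1 2] s[of 1 3] s[of 2 3])
qed

definition Atr :: "real^3^3 \<Rightarrow> real^3 \<Rightarrow> real^3 \<Rightarrow> real^3 \<Rightarrow> real^3^3" where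
  "Atr A a b c = (\<chi> i j. bil A ((vector [a,b,c] :: (real^3)^3) $ i) ((vector [a,b,c] :: (real^3)^3) $ j))"

lemma bil_Atr: "bil A (lin a b c y) (lin a b c z) = bil (Atr A a b c) y z"
proof -
  have "bil A (lin a b c y) (lin a b c z) =
     y$1*z$1*bil A a a + y$1*z$2*bil A a b + y$1*z$3*bil A a c +
     y$2*z$1*bil A b a + y$2*z$2*bil A b b + y$2*z$3*bil A b c +
     y$3*z$1*bil A c a + y$3*z$2*bil A c b + y$3*z$3*bil A c c"
    by (simp add: lin_def bil_lin algebra_simps)
  also have "\<dots> = bil (Atr A a b c) y z"
    by (simp add: bil_def Atr_def inner_vec_def matrix_vector_mult_def sum_3 algebra_simps)
  finally show ?thesis .
qed

lemma quad_Atr: "quad (Atr A a b c) y = quad A (lin a b c y)"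
  by (simp add: quad_bil bil_Atr)

lemma Atr_sym: "transpose A = A \<Longrightarrow> transpose (Atr A a b c) = Atr A a b c"
proof -
  assume "transpose A = A"
  hence "bil A x y = bil A y x" for x y using bil_sym by blast
  thus ?thesis unfolding Atr_def transpose_def by (simp add: vec_eq_iff)
qed

lemma Atr_zero: assumes "br a b c \<noteq> 0" "Atr A a b c = 0" shows "A = 0"
proof -
  have b0: "bil A x z = 0" for x z
  proof -
    have "bil A x z = bil A (lin a b c (cramer a b c x)) (lin a b c (cramer a b c z))"
      using lin_cramer[OF assms(1)] by simp
    also have "\<dots> = 0" unfolding bil_Atr assms(2) by (simp add: bil_def)
    finally show ?thesis .
  qed
  have "A *v z = 0" for z using b0[of "A *v z" z] by (simp add: bil_def)
  then show ?thesis by (metis matrix_eq matrix_vector_mult_0)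
qed

lemma conic_transfer:
  assumes "br a b c \<noteq> 0" "on_common_conic (range (\<lambda>l. lin a b c (Y$l)))"
  shows "on_common_conic (range (\<lambda>l. (Y::config)$l))"
proof -
  obtain A where A: "transpose A = A" "A \<noteq> 0" "\<forall>v\<in>range (\<lambda>l. lin a b c (Y$l)). quad A v = 0"
    using assms(2) unfolding on_common_conic_def by blast
  show ?thesis unfolding on_common_conic_def
  proof (intro exI[of _ "Atr A a b c"] conjI)
    show "transpose (Atr A a b c) = Atr A a b c" using Atr_sym A(1) by blast
    show "Atr A a b c \<noteq> 0" using Atr_zero assms(1) A(2) by blast
    show "\<forall>v\<in>range (($) Y). quad (Atr A a b c) v = 0" using A(3) by (auto simp: quad_Atr)
  qed
qed

definition ltr :: "real^3 \<Rightarrow> real^3 \<Rightarrow> real^3 \<Rightarrow> config \<Rightarrow> config" where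
  "ltr a b c Y = (\<chi> l. lin a b c (Y$l))"

lemma typical_transform:
  assumes "typical_config Y" "br a b c \<noteq> 0"
  shows "typical_config (ltr a b c Y)"
proof (rule typical_crit)
  show "\<forall>i j k. i \<noteq> j \<and> j \<noteq> k \<and> i \<noteq> k \<longrightarrow> br (ltr a b c Y$i) (ltr a b c Y$j) (ltr a b c Y$k) \<noteq> 0"
    using assms typical_br by (simp add: ltr_def br_lin)
  show "\<not> on_common_conic (range (($) (ltr a b c Y)))"
  proof
    assume "on_common_conic (range (($) (ltr a b c Y)))"
    hence "on_common_conic (range (\<lambda>l. lin a b c (Y$l)))" unfolding ltr_def by simp
    hence "on_common_conic (range (\<lambda>l. Y$l))" using conic_transfer[OF assms(2)] by blast
    thus False using assms(1) unfolding typical_config_def by simp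
  qed
qed




definition e1 :: "real^3" where "e1 = vector [1,0,0]"
definition e2 :: "real^3" where "e2 = vector [0,1,0]"
definition e3 :: "real^3" where "e3 = vector [0,0,1]"

definition glrel :: "real^3 \<Rightarrow> real^3 \<Rightarrow> real^3 \<Rightarrow> real^3 \<Rightarrow> real^3 \<Rightarrow> real^3 \<Rightarrow> bool" where
 "glrel a b c a' b' c' \<longleftrightarrow> (\<exists>p q r. path p \<and> path q \<and> path r \<and>
     p 0 = a \<and> q 0 = b \<and> r 0 = c \<and> p 1 = a' \<and> q 1 = b' \<and> r 1 = c' \<and>
     (\<forall>s\<in>{0..1}. br (p s) (q s) (r s) > 0))"

lemma glrel_sym: assumes "glrel a b c a' b' c'" shows "glrel a' b' c' a b c"
proof -
  obtain p q r where h: "path p" "path q" "path r" "p 0 = a" "q 0 = b" "r 0 = c" "p 1 = a'" "q 1 = b'" "r 1 = c'"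
    "\<forall>s\<in>{0..1}. br (p s) (q s) (r s) > 0" using assms unfolding glrel_def by blast
  show ?thesis unfolding glrel_def
    apply (rule exI[of _ "reversepath p"], rule exI[of _ "reversepath q"], rule exI[of _ "reversepath r"])
    using h by (simp add: path_reversepath) (auto simp: reversepath_def)
qed

lemma glrel_trans: assumes "glrel a b c a' b' c'" "glrel a' b' c' a'' b'' c''" shows "glrel a b c a'' b'' c''"
proof -
  obtain p q r where h: "path p" "path q" "path r" "p 0 = a" "q 0 = b" "r 0 = c" "p 1 = a'" "q 1 = b'" "r 1 = c'"
    "\<forall>s\<in>{0..1}. br (p s) (q s) (r s) > 0" using assms(1) unfolding glrel_def by blast
  obtain p' q' r' where h': "path p'" "path q'" "path r'" "p' 0 = a'" "q' 0 = b'" "r' 0 = c'" "p' 1 = a''" "q' 1 = b''" "r' 1 = c''"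
    "\<forall>s\<in>{0..1}. br (p' s) (q' s) (r' s) > 0" using assms(2) unfolding glrel_def by blast
  have pos: "br ((p +++ p') s) ((q +++ q') s) ((r +++ r') s) > 0" if "s \<in> {0..1}" for s
  proof (cases "s \<le> 1/2")
    case True
    then show ?thesis using h(10) that by (simp add: joinpaths_def)
  next
    case False
    then show ?thesis using h'(10) that by (simp add: joinpaths_def)
  qed
  show ?thesis unfolding glrel_def
    apply (rule exI[of _ "p +++ p'"], rule exI[of _ "q +++ q'"], rule exI[of _ "r +++ r'"])
    using h h' pos by (simp add: path_join_imp pathstart_def pathfinish_def) (auto simp: joinpaths_def)
qed

lemma glrel_cyc: assumes "glrel a b c a' b' c'" shows "glrel b c a b' c' a'"
proof -
  obtain p q r where h: "path p" "path q" "path r" "p 0 = a" "q 0 = b" "r 0 = c" "p 1 = a'" "q 1 = b'" "r 1 = c'"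
    "\<forall>s\<in>{0..1}. br (p s) (q s) (r s) > 0" using assms(1) unfolding glrel_def by blast
  show ?thesis unfolding glrel_def
    by (rule exI[of _ q], rule exI[of _ r], rule exI[of _ p]) (simp add: h br_cyc)
qed

lemma glrel_move1: assumes "br a b c > 0" "br a' b c > 0" shows "glrel a b c a' b c"
proof -
  define p where "p = (\<lambda>s::real. (1 - s) *\<^sub>R a + s *\<^sub>R a')"
  have "path p" unfolding p_def path_def by (intro continuous_intros)
  moreover have "br (p s) b c > 0" if "s \<in> {0..1}" for s
  proof -
    have "br (p s) b c = (1 - s) * br a b c + s * br a' b c" by (simp add: p_def br_add1 br_scale1)
    moreover have "(1 - s) * br a b c \<ge> 0" "s * br a' b c \<ge> 0" using that assms by auto
    moreover have "(1 - s) * br a b c > 0 \<or> s * br a' b c > 0" using that assms by (cases "s = 1") auto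
    ultimately show ?thesis by linarith
  qed
  ultimately show ?thesis unfolding glrel_def
    by (intro exI[of _ p] exI[of _ "\<lambda>_. b"] exI[of _ "\<lambda>_. c"]) (auto simp: p_def path_def)
qed

lemma glrel_move2: assumes "br a b c > 0" "br a b' c > 0" shows "glrel a b c a b' c"
proof -
  have "glrel b c a b' c a" using glrel_move1[of b c a b'] assms by (simp add: br_cyc)
  thus ?thesis using glrel_cyc by blast
qed

lemma glrel_move3: assumes "br a b c > 0" "br a b c' > 0" shows "glrel a b c a b c'"
proof -
  have "glrel c a b c' a b" using glrel_move1[of c a b c'] assms by (simp add: br_cyc)
  thus ?thesis using glrel_cyc by blast
qed

lemma glrel_flip12: assumes "br a b c > 0" shows "glrel a b c (-a) (-b) c"
proof -
  have r: "glrel x y c (-y) x c" if "br x y c > 0" for x y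
  proof -
    have 1: "glrel x y c x (y + x) c" using that by (intro glrel_move2) (simp_all add: br_add2)
    have 2: "glrel x (y + x) c (-y) (y + x) c" using that
      by (intro glrel_move1) (simp_all add: br_add2 br_neg1 br_swap12[of y x])
    have 3: "glrel (-y) (y + x) c (-y) x c" using that
      by (intro glrel_move2) (simp_all add: br_add2 br_neg1 br_swap12[of y x])
    show ?thesis using 1 2 3 glrel_trans by blast
  qed
  have "glrel a b c (-b) a c" using r assms by blast
  moreover have "glrel (-b) a c (-a) (-b) c" using r[of "-b" a] assms by (simp add: br_neg1 br_swap12[of a b])
  ultimately show ?thesis using glrel_trans by blast
qed

lemma glrel_flip13: assumes "br a b c > 0" shows "glrel a b c (-a) b (-c)"
proof -
  have "glrel c a b (-c) (-a) b" using glrel_flip12[of c a b] assms by (simp add: br_cyc)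
  thus ?thesis using glrel_cyc by blast
qed

lemma glrel_flip23: assumes "br a b c > 0" shows "glrel a b c a (-b) (-c)"
proof -
  have "glrel b c a (-b) (-c) a" using glrel_flip12[of b c a] assms by (simp add: br_cyc)
  thus ?thesis using glrel_cyc glrel_cyc by blast
qed

lemma br_diag: "br (x *\<^sub>R e1) (y *\<^sub>R e2) (z *\<^sub>R e3) = x * y * z"
  by (simp add: br_def e1_def e2_def e3_def)

lemma br_e: "br e1 e2 e3 = 1" by (simp add: br_def e1_def e2_def e3_def)

lemma glrel_refl: "br a b c > 0 \<Longrightarrow> glrel a b c a b c"
  using glrel_move1 by blast

lemma pos_diag: assumes "x > 0" "y > 0" "z > 0"
  shows "glrel (x *\<^sub>R e1) (y *\<^sub>R e2) (z *\<^sub>R e3) e1 e2 e3"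
proof -
  have 1: "glrel (x *\<^sub>R e1) (y *\<^sub>R e2) (z *\<^sub>R e3) e1 (y *\<^sub>R e2) (z *\<^sub>R e3)"
    by (rule glrel_move1) (use assms in \<open>simp_all add: br_diag br_diag[of 1, simplified]\<close>)
  have 2: "glrel e1 (y *\<^sub>R e2) (z *\<^sub>R e3) e1 e2 (z *\<^sub>R e3)"
    by (rule glrel_move2) (use assms in \<open>simp_all add: br_diag[of 1 y, simplified] br_diag[of 1 1, simplified]\<close>)
  have 3: "glrel e1 e2 (z *\<^sub>R e3) e1 e2 e3"
    by (rule glrel_move3) (use assms in \<open>simp_all add: br_diag[of 1 1, simplified] br_e\<close>)
  show ?thesis using glrel_trans[OF glrel_trans[OF 1 2] 3] .
qed

lemma diag_id: assumes "x * y * z > 0"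
  shows "glrel (x *\<^sub>R e1) (y *\<^sub>R e2) (z *\<^sub>R e3) e1 e2 e3"
proof -
  have b: "br (x *\<^sub>R e1) (y *\<^sub>R e2) (z *\<^sub>R e3) > 0" using assms by (simp add: br_diag)
  have nz: "x \<noteq> 0" "y \<noteq> 0" "z \<noteq> 0" using assms by auto
  consider "x > 0" "y > 0" "z > 0" | "x < 0" "y < 0" "z > 0" | "x < 0" "y > 0" "z < 0" | "x > 0" "y < 0" "z < 0"
    using assms nz by (cases "x > 0"; cases "y > 0"; cases "z > 0")
      (auto simp: zero_less_mult_iff mult_less_0_iff)
  then show ?thesis
  proof cases
    case 1 then show ?thesis using pos_diag by blast
  next
    case 2
    have "glrel (x *\<^sub>R e1) (y *\<^sub>R e2) (z *\<^sub>R e3) ((-x) *\<^sub>R e1) ((-y) *\<^sub>R e2) (z *\<^sub>R e3)"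
      using glrel_flip12[OF b] by simp
    moreover have "glrel ((-x) *\<^sub>R e1) ((-y) *\<^sub>R e2) (z *\<^sub>R e3) e1 e2 e3" using pos_diag[of "-x" "-y" z] 2 by simp
    ultimately show ?thesis by (rule glrel_trans)
  next
    case 3
    have "glrel (x *\<^sub>R e1) (y *\<^sub>R e2) (z *\<^sub>R e3) ((-x) *\<^sub>R e1) (y *\<^sub>R e2) ((-z) *\<^sub>R e3)"
      using glrel_flip13[OF b] by simp
    moreover have "glrel ((-x) *\<^sub>R e1) (y *\<^sub>R e2) ((-z) *\<^sub>R e3) e1 e2 e3" using pos_diag[of "-x" y "-z"] 3 by simp
    ultimately show ?thesis by (rule glrel_trans)
  next
    case 4
    have "glrel (x *\<^sub>R e1) (y *\<^sub>R e2) (z *\<^sub>R e3) (x *\<^sub>R e1) ((-y) *\<^sub>R e2) ((-z) *\<^sub>R e3)"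
      using glrel_flip23[OF b] by simp
    moreover have "glrel (x *\<^sub>R e1) ((-y) *\<^sub>R e2) ((-z) *\<^sub>R e3) e1 e2 e3" using pos_diag[of x "-y" "-z"] 4 by simp
    ultimately show ?thesis by (rule glrel_trans)
  qed
qed

lemma gl_id: assumes "br a b c > 0" shows "glrel a b c e1 e2 e3"
proof -
  obtain a1 where A1: "glrel a b c a1 b c" "a1$1 \<noteq> 0" "br a1 b c > 0"
  proof (cases "a$1 \<noteq> 0")
    case True then show ?thesis using that glrel_refl assms by blast
  next
    case False
    show ?thesis
    proof (cases "b$1 \<noteq> 0")
      case True
      have "br (a + b) b c = br a b c" by (simp add: br_add1)
      then show ?thesis using that[of "a + b"] glrel_move1[of a b c "a + b"] assms False True by simp
    next
      case F2: False
      have "c$1 \<noteq> 0"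
      proof
        assume "c$1 = 0"
        hence "br a b c = 0" using False F2 by (simp add: br_def)
        thus False using assms by simp
      qed
      have "br (a + c) b c = br a b c" by (simp add: br_add1)
      then show ?thesis using that[of "a + c"] glrel_move1[of a b c "a + c"] assms False \<open>c$1 \<noteq> 0\<close> by simp
    qed
  qed
  define b1 where "b1 = b - (b$1 / a1$1) *\<^sub>R a1"
  define c1 where "c1 = c - (c$1 / a1$1) *\<^sub>R a1"
  have bb1: "br a1 b1 c = br a1 b c" by (simp add: b1_def br_diff2 br_scale2)
  have bc1: "br a1 b1 c1 = br a1 b c" by (simp add: c1_def br_diff3 br_scale3 bb1)
  have m1: "glrel a1 b c a1 b1 c" using glrel_move2[of a1 b c b1] bb1 A1(3) by simp
  have m2: "glrel a1 b1 c a1 b1 c1" using glrel_move3[of a1 b1 c c1] bb1 bc1 A1(3) by simp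
  have B1: "glrel a b c a1 b1 c1" using glrel_trans[OF glrel_trans[OF A1(1) m1] m2] .
  have z1: "b1$1 = 0" "c1$1 = 0" using A1(2) by (simp_all add: b1_def c1_def)
  have brf: "br a1 y z = a1$1 * (y$2*z$3 - y$3*z$2)" if "y$1 = 0" "z$1 = 0" for y z
    using that by (simp add: br_def)
  obtain b2 where B2: "glrel a b c a1 b2 c1" "b2$1 = 0" "b2$2 \<noteq> 0" "br a1 b2 c1 > 0"
  proof (cases "b1$2 \<noteq> 0")
    case True then show ?thesis using that B1 z1 A1 bc1 by auto
  next
    case False
    have "c1$2 \<noteq> 0"
    proof
      assume "c1$2 = 0"
      hence "br a1 b1 c1 = 0" using False brf z1 by simp
      thus False using bc1 A1 by simp
    qed
    have e: "br a1 (b1 + c1) c1 = br a1 b1 c1" by (simp add: br_add2)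
    have m: "glrel a1 b1 c1 a1 (b1 + c1) c1" using glrel_move2[of a1 b1 c1 "b1 + c1"] e bc1 A1(3) by simp
    have "glrel a b c a1 (b1 + c1) c1" using glrel_trans[OF B1 m] .
    then show ?thesis using that[of "b1 + c1"] z1 False \<open>c1$2 \<noteq> 0\<close> e bc1 A1 by simp
  qed
  define c2 where "c2 = c1 - (c1$2 / b2$2) *\<^sub>R b2"
  have bc2: "br a1 b2 c2 = br a1 b2 c1" by (simp add: c2_def br_diff3 br_scale3)
  have m3: "glrel a1 b2 c1 a1 b2 c2" using glrel_move3[of a1 b2 c1 c2] bc2 B2(4) by simp
  have C2: "glrel a b c a1 b2 c2" using glrel_trans[OF B2(1) m3] .
  have z2: "c2$1 = 0" "c2$2 = 0" using B2 z1 by (simp_all add: c2_def)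
  have c23: "c2$3 \<noteq> 0"
  proof
    assume "c2$3 = 0"
    hence "br a1 b2 c2 = 0" using z2 B2(2) brf by simp
    thus False using bc2 B2 by simp
  qed
  define a3 where "a3 = a1 - (a1$3 / c2$3) *\<^sub>R c2"
  define b3 where "b3 = b2 - (b2$3 / c2$3) *\<^sub>R c2"
  define a4 where "a4 = a3 - (a3$2 / b3$2) *\<^sub>R b3"
  have e3': "br a3 b2 c2 = br a1 b2 c2" by (simp add: a3_def br_diff1 br_scale1)
  have e4: "br a3 b3 c2 = br a1 b2 c2" by (simp add: b3_def br_diff2 br_scale2 e3')
  have e5: "br a4 b3 c2 = br a1 b2 c2" by (simp add: a4_def br_diff1 br_scale1 e4)
  have pos: "br a1 b2 c2 > 0" using bc2 B2 by simp
  have m4: "glrel a1 b2 c2 a3 b2 c2" using glrel_move1[of a1 b2 c2 a3] e3' pos by simp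
  have m5: "glrel a3 b2 c2 a3 b3 c2" using glrel_move2[of a3 b2 c2 b3] e3' e4 pos by simp
  have m6: "glrel a3 b3 c2 a4 b3 c2" using glrel_move1[of a3 b3 c2 a4] e4 e5 pos by simp
  have D: "glrel a b c a4 b3 c2" using glrel_trans[OF glrel_trans[OF glrel_trans[OF C2 m4] m5] m6] .
  have b32: "b3$2 = b2$2" using z2 by (simp add: b3_def)
  have v: "a4 = (a1$1) *\<^sub>R e1" "b3 = (b2$2) *\<^sub>R e2" "c2 = (c2$3) *\<^sub>R e3"
    using z2 c23 B2(2,3) z1 b32
    by (simp_all add: a4_def a3_def b3_def vec_eq_iff forall_3 e1_def e2_def e3_def)
  obtain x y z where xyz: "a4 = x *\<^sub>R e1" "b3 = y *\<^sub>R e2" "c2 = z *\<^sub>R e3" using v by blast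
  have "x * y * z > 0" using e5 pos xyz by (simp add: br_diag)
  then have "glrel a4 b3 c2 e1 e2 e3" using diag_id xyz by simp
  then show ?thesis using glrel_trans[OF D] by blast
qed

lemma lin_e: "lin e1 e2 e3 y = y"
  by (simp add: lin_def e1_def e2_def e3_def vec_eq_iff forall_3)

lemma gl_config_path:
  assumes "br a b c > 0" "typical_config Y"
  shows "\<exists>\<Gamma>::real \<Rightarrow> config. continuous_on {0..1} \<Gamma> \<and> \<Gamma> 0 = ltr a b c Y \<and> \<Gamma> 1 = Y \<and>
           (\<forall>s\<in>{0..1}. typical_config (\<Gamma> s))"
proof -
  obtain p q r where h: "path p" "path q" "path r" "p 0 = a" "q 0 = b" "r 0 = c" "p 1 = e1" "q 1 = e2" "r 1 = e3"
    "\<forall>s\<in>{0..1}. br (p s) (q s) (r s) > 0" using gl_id[OF assms(1)] unfolding glrel_def by blast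
  define \<Gamma> where "\<Gamma> = (\<lambda>s. ltr (p s) (q s) (r s) Y)"
  have "continuous_on {0..1} \<Gamma>" unfolding \<Gamma>_def ltr_def lin_def
    using h(1-3) unfolding path_def by (intro continuous_intros) auto
  moreover have "\<Gamma> 0 = ltr a b c Y" using h by (simp add: \<Gamma>_def)
  moreover have "\<Gamma> 1 = Y" using h by (simp add: \<Gamma>_def ltr_def lin_e)
  moreover have "\<forall>s\<in>{0..1}. typical_config (\<Gamma> s)"
    using h(10) typical_transform[OF assms(2)] unfolding \<Gamma>_def by force
  ultimately show ?thesis by (intro exI[of _ \<Gamma>]) auto
qed




definition vt :: "real \<Rightarrow> real^3" where "vt t = vector [1, t, t^2]"
definition wv :: "real \<Rightarrow> real \<Rightarrow> real^3" where "wv x D = vector [1, x, x^2 - D]"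

definition canon :: "real \<Rightarrow> real \<Rightarrow> real \<Rightarrow> real \<Rightarrow> real \<Rightarrow> real \<Rightarrow> real \<Rightarrow> real \<Rightarrow> real \<Rightarrow> real \<Rightarrow> config" where
 "canon m1 m2 m3 m4 m5 t5 t1 w0 x D = (\<chi> l. if l = 1 then m1 *\<^sub>R vt t1 else if l = 2 then m2 *\<^sub>R e3
    else if l = 3 then m3 *\<^sub>R e1 else if l = 4 then m4 *\<^sub>R vt 1 else if l = 5 then m5 *\<^sub>R vt t5
    else w0 *\<^sub>R wv x D)"

lemma canon_nth:
  "canon m1 m2 m3 m4 m5 t5 t1 w0 x D $ 1 = m1 *\<^sub>R vt t1"
  "canon m1 m2 m3 m4 m5 t5 t1 w0 x D $ 2 = m2 *\<^sub>R e3"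
  "canon m1 m2 m3 m4 m5 t5 t1 w0 x D $ 3 = m3 *\<^sub>R e1"
  "canon m1 m2 m3 m4 m5 t5 t1 w0 x D $ 4 = m4 *\<^sub>R vt 1"
  "canon m1 m2 m3 m4 m5 t5 t1 w0 x D $ 5 = m5 *\<^sub>R vt t5"
  "canon m1 m2 m3 m4 m5 t5 t1 w0 x D $ 0 = w0 *\<^sub>R wv x D"
  by (simp_all add: canon_def)

definition region :: "real \<Rightarrow> real \<Rightarrow> real \<Rightarrow> real \<Rightarrow> real \<Rightarrow> real \<Rightarrow> real \<Rightarrow> real \<Rightarrow> real \<Rightarrow> real \<Rightarrow> bool" where
 "region m1 m2 m3 m4 m5 t5 t1 w0 x D \<longleftrightarrow> m1 > 0 \<and> m2 > 0 \<and> m3 > 0 \<and> m4 > 0 \<and> m5 > 0 \<and>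
    1 < t5 \<and> t5 < x \<and> x < t1 \<and> w0 > 0 \<and> 0 < D \<and> D < (x - 1) * (x - t5)"

definition pos6 :: "config \<Rightarrow> bool" where
 "pos6 Y \<longleftrightarrow>
   br (Y$1) (Y$2) (Y$3) > 0 \<and> br (Y$1) (Y$2) (Y$4) > 0 \<and> br (Y$1) (Y$2) (Y$5) > 0 \<and>
   br (Y$1) (Y$3) (Y$4) > 0 \<and> br (Y$1) (Y$3) (Y$5) > 0 \<and> br (Y$1) (Y$4) (Y$5) > 0 \<and>
   br (Y$2) (Y$3) (Y$4) > 0 \<and> br (Y$2) (Y$3) (Y$5) > 0 \<and> br (Y$2) (Y$4) (Y$5) > 0 \<and>
   br (Y$3) (Y$4) (Y$5) > 0 \<and>
   br (Y$1) (Y$2) (Y$0) > 0 \<and> br (Y$1) (Y$3) (Y$0) > 0 \<and> br (Y$1) (Y$4) (Y$0) > 0 \<and>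
   br (Y$1) (Y$5) (Y$0) > 0 \<and> br (Y$2) (Y$3) (Y$0) > 0 \<and> br (Y$2) (Y$4) (Y$0) > 0 \<and>
   br (Y$2) (Y$5) (Y$0) > 0 \<and> br (Y$3) (Y$4) (Y$0) > 0 \<and> br (Y$3) (Y$5) (Y$0) > 0 \<and>
   br (Y$4) (Y$5) (Y$0) > 0"

lemma pos6_all:
  assumes "pos6 Y"
  shows "\<forall>i j k. i \<noteq> j \<and> j \<noteq> k \<and> i \<noteq> k \<longrightarrow> br (Y$i) (Y$j) (Y$k) \<noteq> 0"
proof -
  have h: "br (Y$1) (Y$2) (Y$3) \<noteq> 0" "br (Y$1) (Y$2) (Y$4) \<noteq> 0" "br (Y$1) (Y$2) (Y$5) \<noteq> 0"
   "br (Y$1) (Y$3) (Y$4) \<noteq> 0" "br (Y$1) (Y$3) (Y$5) \<noteq> 0" "br (Y$1) (Y$4) (Y$5) \<noteq> 0"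
   "br (Y$2) (Y$3) (Y$4) \<noteq> 0" "br (Y$2) (Y$3) (Y$5) \<noteq> 0" "br (Y$2) (Y$4) (Y$5) \<noteq> 0"
   "br (Y$3) (Y$4) (Y$5) \<noteq> 0"
   "br (Y$1) (Y$2) (Y$0) \<noteq> 0" "br (Y$1) (Y$3) (Y$0) \<noteq> 0" "br (Y$1) (Y$4) (Y$0) \<noteq> 0"
   "br (Y$1) (Y$5) (Y$0) \<noteq> 0" "br (Y$2) (Y$3) (Y$0) \<noteq> 0" "br (Y$2) (Y$4) (Y$0) \<noteq> 0"
   "br (Y$2) (Y$5) (Y$0) \<noteq> 0" "br (Y$3) (Y$4) (Y$0) \<noteq> 0" "br (Y$3) (Y$5) (Y$0) \<noteq> 0"
   "br (Y$4) (Y$5) (Y$0) \<noteq> 0" using assms unfolding pos6_def by auto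
  note hh = h br_nz_perm[OF h(1)] br_nz_perm[OF h(2)] br_nz_perm[OF h(3)] br_nz_perm[OF h(4)]
    br_nz_perm[OF h(5)] br_nz_perm[OF h(6)] br_nz_perm[OF h(7)] br_nz_perm[OF h(8)]
    br_nz_perm[OF h(9)] br_nz_perm[OF h(10)] br_nz_perm[OF h(11)] br_nz_perm[OF h(12)]
    br_nz_perm[OF h(13)] br_nz_perm[OF h(14)] br_nz_perm[OF h(15)] br_nz_perm[OF h(16)]
    br_nz_perm[OF h(17)] br_nz_perm[OF h(18)] br_nz_perm[OF h(19)] br_nz_perm[OF h(20)]
  show ?thesis unfolding forall6 using hh by simp
qed

lemma canon_br:
  "br ((canon m1 m2 m3 m4 m5 t5 t1 w0 x D)$1) ((canon m1 m2 m3 m4 m5 t5 t1 w0 x D)$2) ((canon m1 m2 m3 m4 m5 t5 t1 w0 x D)$3) = m1*m2*m3*t1"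
  "br ((canon m1 m2 m3 m4 m5 t5 t1 w0 x D)$1) ((canon m1 m2 m3 m4 m5 t5 t1 w0 x D)$2) ((canon m1 m2 m3 m4 m5 t5 t1 w0 x D)$4) = m1*m2*m4*(t1-1)"
  "br ((canon m1 m2 m3 m4 m5 t5 t1 w0 x D)$1) ((canon m1 m2 m3 m4 m5 t5 t1 w0 x D)$2) ((canon m1 m2 m3 m4 m5 t5 t1 w0 x D)$5) = m1*m2*m5*(t1-t5)"
  "br ((canon m1 m2 m3 m4 m5 t5 t1 w0 x D)$1) ((canon m1 m2 m3 m4 m5 t5 t1 w0 x D)$3) ((canon m1 m2 m3 m4 m5 t5 t1 w0 x D)$4) = m1*m3*m4*t1*(t1-1)"
  "br ((canon m1 m2 m3 m4 m5 t5 t1 w0 x D)$1) ((canon m1 m2 m3 m4 m5 t5 t1 w0 x D)$3) ((canon m1 m2 m3 m4 m5 t5 t1 w0 x D)$5) = m1*m3*m5*t1*t5*(t1-t5)"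
  "br ((canon m1 m2 m3 m4 m5 t5 t1 w0 x D)$1) ((canon m1 m2 m3 m4 m5 t5 t1 w0 x D)$4) ((canon m1 m2 m3 m4 m5 t5 t1 w0 x D)$5) = m1*m4*m5*(t1-1)*(t1-t5)*(t5-1)"
  "br ((canon m1 m2 m3 m4 m5 t5 t1 w0 x D)$2) ((canon m1 m2 m3 m4 m5 t5 t1 w0 x D)$3) ((canon m1 m2 m3 m4 m5 t5 t1 w0 x D)$4) = m2*m3*m4"
  "br ((canon m1 m2 m3 m4 m5 t5 t1 w0 x D)$2) ((canon m1 m2 m3 m4 m5 t5 t1 w0 x D)$3) ((canon m1 m2 m3 m4 m5 t5 t1 w0 x D)$5) = m2*m3*m5*t5"
  "br ((canon m1 m2 m3 m4 m5 t5 t1 w0 x D)$2) ((canon m1 m2 m3 m4 m5 t5 t1 w0 x D)$4) ((canon m1 m2 m3 m4 m5 t5 t1 w0 x D)$5) = m2*m4*m5*(t5-1)"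
  "br ((canon m1 m2 m3 m4 m5 t5 t1 w0 x D)$3) ((canon m1 m2 m3 m4 m5 t5 t1 w0 x D)$4) ((canon m1 m2 m3 m4 m5 t5 t1 w0 x D)$5) = m3*m4*m5*t5*(t5-1)"
  "br ((canon m1 m2 m3 m4 m5 t5 t1 w0 x D)$1) ((canon m1 m2 m3 m4 m5 t5 t1 w0 x D)$2) ((canon m1 m2 m3 m4 m5 t5 t1 w0 x D)$0) = m1*m2*w0*(t1 - x)"
  "br ((canon m1 m2 m3 m4 m5 t5 t1 w0 x D)$1) ((canon m1 m2 m3 m4 m5 t5 t1 w0 x D)$3) ((canon m1 m2 m3 m4 m5 t5 t1 w0 x D)$0) = m1*m3*w0*t1*(D + x*(t1-x))"
  "br ((canon m1 m2 m3 m4 m5 t5 t1 w0 x D)$1) ((canon m1 m2 m3 m4 m5 t5 t1 w0 x D)$4) ((canon m1 m2 m3 m4 m5 t5 t1 w0 x D)$0) = m1*m4*w0*(t1-1)*(D + (t1-x)*(x-1))"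
  "br ((canon m1 m2 m3 m4 m5 t5 t1 w0 x D)$1) ((canon m1 m2 m3 m4 m5 t5 t1 w0 x D)$5) ((canon m1 m2 m3 m4 m5 t5 t1 w0 x D)$0) = m1*m5*w0*(t1-t5)*(D + (t1-x)*(x-t5))"
  "br ((canon m1 m2 m3 m4 m5 t5 t1 w0 x D)$2) ((canon m1 m2 m3 m4 m5 t5 t1 w0 x D)$3) ((canon m1 m2 m3 m4 m5 t5 t1 w0 x D)$0) = m2*m3*w0*x"
  "br ((canon m1 m2 m3 m4 m5 t5 t1 w0 x D)$2) ((canon m1 m2 m3 m4 m5 t5 t1 w0 x D)$4) ((canon m1 m2 m3 m4 m5 t5 t1 w0 x D)$0) = m2*m4*w0*(x-1)"
  "br ((canon m1 m2 m3 m4 m5 t5 t1 w0 x D)$2) ((canon m1 m2 m3 m4 m5 t5 t1 w0 x D)$5) ((canon m1 m2 m3 m4 m5 t5 t1 w0 x D)$0) = m2*m5*w0*(x-t5)"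
  "br ((canon m1 m2 m3 m4 m5 t5 t1 w0 x D)$3) ((canon m1 m2 m3 m4 m5 t5 t1 w0 x D)$4) ((canon m1 m2 m3 m4 m5 t5 t1 w0 x D)$0) = m3*m4*w0*(x*(x-1) - D)"
  "br ((canon m1 m2 m3 m4 m5 t5 t1 w0 x D)$3) ((canon m1 m2 m3 m4 m5 t5 t1 w0 x D)$5) ((canon m1 m2 m3 m4 m5 t5 t1 w0 x D)$0) = m3*m5*w0*t5*(x*(x-t5) - D)"
  "br ((canon m1 m2 m3 m4 m5 t5 t1 w0 x D)$4) ((canon m1 m2 m3 m4 m5 t5 t1 w0 x D)$5) ((canon m1 m2 m3 m4 m5 t5 t1 w0 x D)$0) = m4*m5*w0*(t5-1)*((x-1)*(x-t5) - D)"
  by (simp_all add: canon_nth br_def vt_def wv_def e1_def e3_def power2_eq_square algebra_simps)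

lemma canon_typical:
  assumes "region m1 m2 m3 m4 m5 t5 t1 w0 x D"
  shows "typical_config (canon m1 m2 m3 m4 m5 t5 t1 w0 x D)"
proof (rule typical_crit)
  have r: "m1 > 0" "m2 > 0" "m3 > 0" "m4 > 0" "m5 > 0" "1 < t5" "t5 < x" "x < t1" "w0 > 0" "0 < D"
    "D < (x - 1) * (x - t5)" using assms unfolding region_def by auto
  have q1: "(x - 1) * (x - t5) < x * (x - 1)" using r by (simp add: mult_strict_right_mono)
  have q2: "(x - 1) * (x - t5) < x * (x - t5)" using r by (simp add: mult_strict_right_mono)
  have pa: "x > 0" "t1 - x > 0" "x - 1 > 0" "x - t5 > 0" using r by auto
  have p1: "D + x*(t1-x) > 0" "D + (t1-x)*(x-1) > 0" "D + (t1-x)*(x-t5) > 0"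
    using pa r(10) by (metis add_pos_pos mult_pos_pos)+
  have p2: "x*(x-1) - D > 0" "x*(x-t5) - D > 0" using q1 q2 r(11) by linarith+
  have "pos6 (canon m1 m2 m3 m4 m5 t5 t1 w0 x D)" unfolding pos6_def canon_br
    using r q1 q2 p1 p2 by simp
  then show "\<forall>i j k. i \<noteq> j \<and> j \<noteq> k \<and> i \<noteq> k \<longrightarrow>
    br (canon m1 m2 m3 m4 m5 t5 t1 w0 x D $ i) (canon m1 m2 m3 m4 m5 t5 t1 w0 x D $ j) (canon m1 m2 m3 m4 m5 t5 t1 w0 x D $ k) \<noteq> 0"
    using pos6_all by blast
  show "\<not> on_common_conic (range (($) (canon m1 m2 m3 m4 m5 t5 t1 w0 x D)))"
  proof
    assume "on_common_conic (range (($) (canon m1 m2 m3 m4 m5 t5 t1 w0 x D)))"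
    then obtain A where A: "transpose A = A" "A \<noteq> 0"
      "\<forall>v\<in>range (($) (canon m1 m2 m3 m4 m5 t5 t1 w0 x D)). quad A v = 0"
      unfolding on_common_conic_def by blast
    have s: "A$i$j = A$j$i" for i j using sym_entry[OF A(1)] by blast
    have qv: "quad A (vector [p,q,r]) = A$1$1*p*p + A$2$2*q*q + A$3$3*r*r + 2*A$1$2*p*q + 2*A$1$3*p*r + 2*A$2$3*q*r" for p q r
      by (simp add: quad_def inner_vec_def matrix_vector_mult_def sum_3 s[of 2 1] s[of 3 1] s[of 3 2] algebra_simps)
    have qs: "quad A (c *\<^sub>R v) = c * c * quad A v" for c v
      by (simp add: quad_def matrix_vector_mult_scaleR)
    have z: "quad A (canon m1 m2 m3 m4 m5 t5 t1 w0 x D $ l) = 0" for l using A(3) by auto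
    have z1: "quad A (vt t1) = 0" using z[of 1] r by (simp add: canon_nth qs)
    have z2: "quad A e3 = 0" using z[of 2] r by (simp add: canon_nth qs)
    have z3: "quad A e1 = 0" using z[of 3] r by (simp add: canon_nth qs)
    have z4: "quad A (vt 1) = 0" using z[of 4] r by (simp add: canon_nth qs)
    have z5: "quad A (vt t5) = 0" using z[of 5] r by (simp add: canon_nth qs)
    have z0: "quad A (wv x D) = 0" using z[of 0] r by (simp add: canon_nth qs)
    have a11: "A$1$1 = 0" using z3 by (simp add: e1_def qv)
    have a33: "A$3$3 = 0" using z2 by (simp add: e3_def qv)
    define g where "g t = 2*A$1$2 + (A$2$2 + 2*A$1$3)*t + 2*A$2$3*t*t" for t
    have gv: "quad A (vt t) = t * g t" for t
      by (simp add: vt_def qv a11 a33 g_def power2_eq_square algebra_simps)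
    have g1: "g 1 = 0" using z4 gv[of 1] by simp
    have g5: "g t5 = 0" using z5 gv[of t5] r by simp
    have g0: "g t1 = 0" using z1 gv[of t1] r by simp
    have d1: "g t5 - g 1 = (t5 - 1) * ((A$2$2 + 2*A$1$3) + 2*A$2$3*(t5 + 1))"
      by (simp add: g_def algebra_simps)
    have d2: "g t1 - g 1 = (t1 - 1) * ((A$2$2 + 2*A$1$3) + 2*A$2$3*(t1 + 1))"
      by (simp add: g_def algebra_simps)
    have e1': "(A$2$2 + 2*A$1$3) + 2*A$2$3*(t5 + 1) = 0" using d1 g1 g5 r by simp
    have e2': "(A$2$2 + 2*A$1$3) + 2*A$2$3*(t1 + 1) = 0" using d2 g1 g0 r by simp
    have "2*A$2$3*(t1 - t5) = ((A$2$2 + 2*A$1$3) + 2*A$2$3*(t1 + 1)) - ((A$2$2 + 2*A$1$3) + 2*A$2$3*(t5 + 1))"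
      by (simp add: algebra_simps)
    also have "\<dots> = 0" using e1' e2' by simp
    finally have "2*A$2$3*(t1 - t5) = 0" .
    hence a23: "A$2$3 = 0" using r by simp
    have b: "A$2$2 + 2*A$1$3 = 0" using e1' a23 by simp
    have a12: "A$1$2 = 0" using g1 a23 b by (simp add: g_def)
    have b': "A$2$2 = - 2*A$1$3" using b by simp
    have "quad A (wv x D) = -2*A$1$3*D"
      by (simp add: wv_def qv a11 a33 a12 a23 b' power2_eq_square algebra_simps)
    hence a13: "A$1$3 = 0" using z0 r by simp
    have a22: "A$2$2 = 0" using b a13 by simp
    have "A = 0"
      unfolding vec_eq_iff forall_3
      using a11 a22 a33 a12 a13 a23 s[of 2 1] s[of 3 1] s[of 3 2] by (simp add: forall_3)
    thus False using A(2) by simp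
  qed
qed




lemma pos_of: "0 < a * b \<Longrightarrow> 0 \<le> a \<Longrightarrow> 0 < (b::real)"
  by (auto simp: zero_less_mult_iff)

lemma pos_of': "0 < a * b \<Longrightarrow> 0 < a \<Longrightarrow> 0 < (b::real)"
  by (auto simp: zero_less_mult_iff)

lemma recog:
  fixes Y :: config
  assumes P: "pos6 Y" and Y3: "Y$3 = u3 *\<^sub>R e1" and Y2: "Y$2 = u2 *\<^sub>R e3" and Y4: "Y$4 = u4 *\<^sub>R vt 1"
    and C1: "(Y$1)$2 * (Y$1)$2 = (Y$1)$1 * (Y$1)$3" and C5: "(Y$5)$2 * (Y$5)$2 = (Y$5)$1 * (Y$5)$3"
    and W: "(Y$0)$2 * (Y$0)$2 - (Y$0)$1 * (Y$0)$3 > 0"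
  shows "\<exists>m1 m2 m3 m4 m5 t5 t1 w0 x D. region m1 m2 m3 m4 m5 t5 t1 w0 x D \<and> Y = canon m1 m2 m3 m4 m5 t5 t1 w0 x D"
proof -
  have onconic: "\<exists>m t. m \<noteq> 0 \<and> v = m *\<^sub>R vt t" if c: "v$2 * v$2 = v$1 * v$3" and b: "br v (Y$2) z \<noteq> 0" for v z
  proof -
    have "v$1 \<noteq> 0"
    proof
      assume 0: "v$1 = 0"
      hence "v$2 = 0" using c by simp
      hence ve: "v = (v$3) *\<^sub>R e3" using 0 by (simp add: vec_eq_iff forall_3 e3_def)
      have "br v (Y$2) z = 0" by (subst ve) (simp add: Y2 br_scale1 br_scale2)
      thus False using b by simp
    qed
    moreover have "v = (v$1) *\<^sub>R vt (v$2 / v$1)"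
      using \<open>v$1 \<noteq> 0\<close> c by (simp add: vec_eq_iff forall_3 vt_def power2_eq_square field_simps)
    ultimately show ?thesis by blast
  qed
  have pp: "br (Y$1) (Y$2) (Y$3) > 0" "br (Y$2) (Y$3) (Y$5) > 0" using P unfolding pos6_def by auto
  obtain m1 t1 where M1: "m1 \<noteq> 0" "Y$1 = m1 *\<^sub>R vt t1" using onconic[OF C1, of "Y$3"] pp by auto
  obtain m5 t5 where M5: "m5 \<noteq> 0" "Y$5 = m5 *\<^sub>R vt t5"
    using onconic[OF C5, of "Y$3"] pp br_nz_perm(4)[of "Y$2" "Y$3" "Y$5"] by auto
  define w0 where "w0 = (Y$0)$1"
  define w1 where "w1 = (Y$0)$2"
  define w2 where "w2 = (Y$0)$3"
  define C where "C = canon m1 u2 u3 u4 m5 t5 t1 1 0 0"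
  have YC: "Y$i = C$i" if "i \<in> {1,2,3,4,5}" for i
    using that M1 M5 Y2 Y3 Y4 by (auto simp: C_def canon_nth)
  note cb = canon_br[of m1 u2 u3 u4 m5 t5 t1 1 0 0, folded C_def]
  have b: "0 < m1*u2*u3*t1" "0 < m1*u2*u4*(t1-1)" "0 < m1*u2*m5*(t1-t5)"
    "0 < m1*u3*u4*t1*(t1-1)" "0 < m1*u3*m5*t1*t5*(t1-t5)" "0 < m1*u4*m5*(t1-1)*(t1-t5)*(t5-1)"
    "0 < u2*u3*u4" "0 < u2*u3*m5*t5" "0 < u2*u4*m5*(t5-1)" "0 < u3*u4*m5*t5*(t5-1)"
    using P unfolding pos6_def by (simp_all add: YC cb)
  have "0 < (m1*u2*u3*t1) * (m1*u2*m5*(t1-t5)) * (m1*u3*u4*t1*(t1-1)) * (m1*u4*m5*(t1-1)*(t1-t5)*(t5-1))"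
    using b by simp
  also have "\<dots> = (m1*m1*u2*u3*u4*m5*t1*(t1-1)*(t1-t5))^2 * (t5 - 1)"
    by (simp add: power2_eq_square algebra_simps)
  finally have "0 < (m1*m1*u2*u3*u4*m5*t1*(t1-1)*(t1-t5))^2 * (t5 - 1)" .
  from pos_of[OF this zero_le_power2] have t5g: "t5 > 1" by simp
  have "0 < (u2*u3*u4) * (u2*u3*m5*t5)" using b by simp
  also have "\<dots> = (u2*u3)^2 * (u4*m5*t5)" by (simp add: power2_eq_square algebra_simps)
  finally have "0 < (u2*u3)^2 * (u4*m5*t5)" .
  from pos_of[OF this zero_le_power2] have "0 < (u4*m5)*t5" by simp
  hence s45: "0 < u4*m5" using t5g by (metis mult.commute pos_of' zero_less_one less_trans)
  have "0 < (u2*u3*u4) * (u2*u4*m5*(t5-1))" using b by simp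
  also have "\<dots> = (u2*u4)^2 * (u3*m5*(t5-1))" by (simp add: power2_eq_square algebra_simps)
  finally have "0 < (u2*u4)^2 * (u3*m5*(t5-1))" .
  from pos_of[OF this zero_le_power2] have "0 < (u3*m5)*(t5-1)" by simp
  hence s35: "0 < u3*m5" using t5g by (metis mult.commute pos_of' diff_gt_0_iff_gt)
  have "0 < (u3*u4*m5) * (t5*(t5-1))" using b(10) by (simp add: algebra_simps)
  moreover have "0 < t5*(t5-1)" using t5g by simp
  ultimately have "0 < u3*u4*m5" by (metis mult.commute pos_of')
  hence "0 < (u3*u4*m5) * ((u3*m5)*(u4*m5))" using s35 s45 by simp
  also have "(u3*u4*m5) * ((u3*m5)*(u4*m5)) = (u3*u4*m5)^2 * m5" by (simp add: power2_eq_square algebra_simps)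
  finally have "0 < (u3*u4*m5)^2 * m5" .
  from pos_of[OF this zero_le_power2] have m5p: "m5 > 0" .
  have u3p: "u3 > 0" using s35 m5p by (metis mult.commute pos_of')
  have u4p: "u4 > 0" using s45 m5p by (metis mult.commute pos_of')
  have "0 < u2 * (u3*u4)" using b(7) by (simp add: algebra_simps)
  hence u2p: "u2 > 0" using u3p u4p by (metis mult.commute pos_of' mult_pos_pos)
  have "0 < (m1*u2*u3*t1) * (m1*u3*u4*t1*(t1-1))" using b by simp
  also have "\<dots> = (m1*u3*t1)^2 * (u2*u4*(t1-1))" by (simp add: power2_eq_square algebra_simps)
  finally have "0 < (m1*u3*t1)^2 * (u2*u4*(t1-1))" .
  from pos_of[OF this zero_le_power2] have "0 < (u2*u4)*(t1-1)" by simp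
  hence t1g: "t1 > 1" using u2p u4p by (metis pos_of' mult_pos_pos diff_gt_0_iff_gt)
  have "0 < (u2*u3*t1) * m1" using b(1) by (simp add: algebra_simps)
  hence m1p: "m1 > 0" using u2p u3p t1g by (metis pos_of' mult_pos_pos zero_less_one less_trans)
  have "0 < (m1*u2*m5) * (t1-t5)" using b(3) by simp
  hence t15: "t1 > t5" using m1p u2p m5p by (metis pos_of' mult_pos_pos diff_gt_0_iff_gt)
    have Y0: "Y$0 = vector [w0, w1, w2]" by (simp add: w0_def w1_def w2_def vec_eq_iff forall_3)
  have wb: "br (Y$1) (Y$2) (Y$0) > 0" "br (Y$2) (Y$5) (Y$0) > 0" "br (Y$4) (Y$5) (Y$0) > 0"
    using P unfolding pos6_def by auto
  have "br (Y$1) (Y$2) (Y$0) = m1*u2*(t1*w0 - w1)"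
    by (simp add: M1 Y2 Y0 br_def vt_def e3_def algebra_simps)
  hence wa: "t1*w0 - w1 > 0" using wb(1) m1p u2p by (metis pos_of' mult_pos_pos)
  have "br (Y$2) (Y$5) (Y$0) = u2*m5*(w1 - t5*w0)"
    by (simp add: M5 Y2 Y0 br_def vt_def e3_def algebra_simps)
  hence wbb: "w1 - t5*w0 > 0" using wb(2) m5p u2p by (metis pos_of' mult_pos_pos)
  have "(t1 - t5) * w0 > 0" using wa wbb by (simp add: algebra_simps)
  hence w0p: "w0 > 0" using t15 by (metis pos_of' diff_gt_0_iff_gt)
  define x where "x = w1 / w0"
  define D where "D = x^2 - w2 / w0"
  have w1e: "w1 = w0 * x" using w0p by (simp add: x_def)
  have w2e: "w2 = w0 * (x^2 - D)" using w0p by (simp add: D_def)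
  have "br (Y$4) (Y$5) (Y$0) = u4*m5*(t5-1)*(w2 - (1+t5)*w1 + t5*w0)"
    by (simp add: Y4 M5 Y0 br_def vt_def power2_eq_square algebra_simps)
  hence "w2 - (1+t5)*w1 + t5*w0 > 0" using wb(3) m5p u4p t5g by (metis pos_of' mult_pos_pos diff_gt_0_iff_gt)
  hence "w0 * ((x^2 - D) - (1+t5)*x + t5) > 0" unfolding w1e w2e by (simp add: algebra_simps)
  hence "(x^2 - D) - (1+t5)*x + t5 > 0" using w0p by (metis pos_of')
  hence Dl: "D < (x - 1) * (x - t5)" by (simp add: power2_eq_square algebra_simps)
  have "w0 * w0 * D > 0" using W unfolding w1_def[symmetric] w0_def[symmetric] w2_def[symmetric] w1e w2e
    by (simp add: power2_eq_square algebra_simps)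
  hence Dp: "D > 0" using w0p by (metis pos_of' mult_pos_pos)
  have xl: "x < t1" using wa w0p unfolding w1e by (simp add: algebra_simps mult_less_cancel_left_pos)
  have xg: "t5 < x" using wbb w0p unfolding w1e by (simp add: algebra_simps mult_less_cancel_left_pos)
  have R: "region m1 u2 u3 u4 m5 t5 t1 w0 x D" unfolding region_def
    using m1p u2p u3p u4p m5p t5g xl xg w0p Dp Dl by simp
  have "Y = canon m1 u2 u3 u4 m5 t5 t1 w0 x D"
  proof -
    have "Y$0 = w0 *\<^sub>R wv x D" unfolding Y0 w1e w2e by (simp add: wv_def vec_eq_iff forall_3)
    thus ?thesis unfolding vec_eq_iff forall6 using M1 M5 Y2 Y3 Y4 by (simp add: canon_nth)
  qed
  thus ?thesis using R by blast
qed

definition lrp :: "real \<Rightarrow> real \<Rightarrow> real \<Rightarrow> real" where "lrp a b s = (1 - s) * a + s * b"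

lemma lrp_pos: assumes "a > 0" "b > 0" "s \<in> {0..1}" shows "lrp a b s > 0"
proof -
  have "(1 - s) * a \<ge> 0" "s * b \<ge> 0" using assms by auto
  moreover have "(1 - s) * a > 0 \<or> s * b > 0" using assms by (cases "s = 1") auto
  ultimately show ?thesis unfolding lrp_def by linarith
qed

lemma lrp_less: assumes "a < c" "b < d" "s \<in> {0..1}" shows "lrp a b s < lrp c d s"
proof -
  have "lrp c d s - lrp a b s = lrp (c - a) (d - b) s" by (simp add: lrp_def algebra_simps)
  moreover have "lrp (c - a) (d - b) s > 0" using lrp_pos assms by simp
  ultimately show ?thesis by simp
qed

lemma lrp_0[simp]: "lrp a b 0 = a" and lrp_1[simp]: "lrp a b 1 = b" by (simp_all add: lrp_def)

lemma cont_if: "continuous_on S f \<Longrightarrow> continuous_on S g \<Longrightarrow> continuous_on S (\<lambda>s. if P then f s else g s)"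
  by (cases P) simp_all

lemma vec3_e: "(vector [a, b, c] :: real^3) = a *\<^sub>R e1 + b *\<^sub>R e2 + c *\<^sub>R e3"
  by (simp add: vec_eq_iff forall_3 e1_def e2_def e3_def)

lemma cont_vec3[continuous_intros]: "continuous_on S f \<Longrightarrow> continuous_on S g \<Longrightarrow> continuous_on S h \<Longrightarrow>
   continuous_on S (\<lambda>s. (vector [f s, g s, h s] :: real^3))"
  unfolding vec3_e by (intro continuous_intros)

lemma canon_path:
  assumes R: "region m1 m2 m3 m4 m5 t5 t1 w0 x D" and R': "region n1 n2 n3 n4 n5 u5 u1 v0 y E"
  shows "\<exists>\<Gamma>::real \<Rightarrow> config. continuous_on {0..1} \<Gamma> \<and> \<Gamma> 0 = canon m1 m2 m3 m4 m5 t5 t1 w0 x D \<and>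
     \<Gamma> 1 = canon n1 n2 n3 n4 n5 u5 u1 v0 y E \<and> (\<forall>s\<in>{0..1}. typical_config (\<Gamma> s))"
proof -
  have r: "m1 > 0" "m2 > 0" "m3 > 0" "m4 > 0" "m5 > 0" "1 < t5" "t5 < x" "x < t1" "w0 > 0" "0 < D"
    "D < (x - 1) * (x - t5)" using R unfolding region_def by auto
  have r': "n1 > 0" "n2 > 0" "n3 > 0" "n4 > 0" "n5 > 0" "1 < u5" "u5 < y" "y < u1" "v0 > 0" "0 < E"
    "E < (y - 1) * (y - u5)" using R' unfolding region_def by auto
  define \<rho> where "\<rho> = D / ((x - 1) * (x - t5))"
  define \<rho>' where "\<rho>' = E / ((y - 1) * (y - u5))"
  have P0: "(x - 1) * (x - t5) > 0" using r by simp
  have P1: "(y - 1) * (y - u5) > 0" using r' by simp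
  have rho: "0 < \<rho>" "\<rho> < 1" using r P0 by (simp_all add: \<rho>_def)
  have rho': "0 < \<rho>'" "\<rho>' < 1" using r' P1 by (simp_all add: \<rho>'_def)
  define G where "G s = canon (lrp m1 n1 s) (lrp m2 n2 s) (lrp m3 n3 s) (lrp m4 n4 s) (lrp m5 n5 s)
     (lrp t5 u5 s) (lrp t1 u1 s) (lrp w0 v0 s) (lrp x y s)
     (lrp \<rho> \<rho>' s * ((lrp x y s - 1) * (lrp x y s - lrp t5 u5 s)))" for s
  have "continuous_on {0..1} G" unfolding G_def canon_def lrp_def vt_def wv_def
    by (intro continuous_on_vec_lambda cont_if continuous_intros)
  moreover have "G 0 = canon m1 m2 m3 m4 m5 t5 t1 w0 x D" using P0 r by (simp add: G_def \<rho>_def)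
  moreover have "G 1 = canon n1 n2 n3 n4 n5 u5 u1 v0 y E" using P1 r' by (simp add: G_def \<rho>'_def)
  moreover have "typical_config (G s)" if s: "s \<in> {0..1}" for s
  proof -
    have lt1: "lrp 1 1 s = 1" by (simp add: lrp_def algebra_simps)
    have a: "lrp \<rho> \<rho>' s > 0" using lrp_pos rho rho' s by blast
    have b: "lrp \<rho> \<rho>' s < 1" using lrp_less[OF rho(2) rho'(2) s] lt1 by simp
    have c: "1 < lrp t5 u5 s" using lrp_less[OF r(6) r'(6) s] lt1 by simp
    have d: "lrp t5 u5 s < lrp x y s" using lrp_less[OF r(7) r'(7) s] .
    have e: "lrp x y s < lrp t1 u1 s" using lrp_less[OF r(8) r'(8) s] .
    have Pp: "(lrp x y s - 1) * (lrp x y s - lrp t5 u5 s) > 0" using c d by simp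
    have f: "lrp \<rho> \<rho>' s * ((lrp x y s - 1) * (lrp x y s - lrp t5 u5 s)) > 0" using a Pp by simp
    have g: "lrp \<rho> \<rho>' s * ((lrp x y s - 1) * (lrp x y s - lrp t5 u5 s)) < (lrp x y s - 1) * (lrp x y s - lrp t5 u5 s)"
      using b Pp mult_strict_right_mono[OF b Pp] by simp
    show ?thesis unfolding G_def
      by (rule canon_typical) (use r r' s lrp_pos c d e f g in \<open>simp add: region_def\<close>)
  qed
  ultimately show ?thesis by (intro exI[of _ G]) auto
qed




lemma conn_sign:
  fixes f :: "'a::topological_space \<Rightarrow> real"
  assumes "connected T" "continuous_on T f" "a \<in> T" "b \<in> T" "f a > 0" "\<forall>x\<in>T. f x \<noteq> 0"
  shows "f b > 0"
proof (rule ccontr)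
  assume "\<not> f b > 0"
  moreover have "f b \<noteq> 0" using assms(4,6) by blast
  ultimately have fb: "f b < 0" by linarith
  have "connected (f ` T)" using connected_continuous_image assms(1,2) by blast
  hence iv: "\<forall>x\<in>f ` T. \<forall>y\<in>f ` T. \<forall>z. x \<le> z \<longrightarrow> z \<le> y \<longrightarrow> z \<in> f ` T"
    unfolding connected_iff_interval .
  have "f b \<in> f ` T" "f a \<in> f ` T" using assms(3,4) by auto
  hence "0 \<in> f ` T" using iv fb assms(5) by (meson less_imp_le)
  thus False using assms(6) by auto
qed

lemma cramer_scale: "cramer a b c (r *\<^sub>R x) = r *\<^sub>R cramer a b c x"
  by (simp add: cramer_def vec_eq_iff forall_3 br_scale1 br_scale2 br_scale3)

lemma cramer_neg: "cramer a b c (- x) = - cramer a b c x"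
  using cramer_scale[of a b c "-1" x] by simp

lemma cont_cramer: "continuous_on S (\<lambda>x. cramer a b c x $ i)"
proof -
  have e: "cramer a b c x = (1 / br a b c) *\<^sub>R vector [br x b c, br a x c, br a b x]" for x
    by (simp add: cramer_def vec_eq_iff forall_3)
  have "continuous_on S (\<lambda>x. vector [br x b c, br a x c, br a b x] :: real^3)"
    unfolding br_def by (intro cont_vec3 continuous_intros)
  hence "continuous_on S (\<lambda>x. (1 / br a b c) *\<^sub>R vector [br x b c, br a x c, br a b x] :: real^3)"
    by (rule continuous_on_scaleR[OF continuous_on_const])
  hence "continuous_on S (\<lambda>x. cramer a b c x)" unfolding e .
  thus ?thesis by (rule continuous_on_component)
qed

lemma outside_transfer:
  assumes B: "br a b c \<noteq> 0" and O: "outside_conic A (lin a b c y)"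
    and H: "\<And>w. quad A (lin a b c w) = \<kappa> * (w$1*w$3 - w$2*w$2)" and K: "\<kappa> \<noteq> 0"
  shows "y$2*y$2 - y$1*y$3 > 0"
proof -
  define h where "h w = w$1*w$3 - w$2*w$2" for w :: "real^3"
  define v where "v = lin a b c y"
  define u where "u = (1 / norm v) *\<^sub>R v"
  define S where "S = sphere (0::real^3) 1 - {w. quad A w = 0}"
  define T where "T = connected_component_set S u"
  have qv: "quad A v \<noteq> 0" and mu: "- u \<in> T" using O unfolding outside_conic_def Let_def v_def u_def T_def S_def by auto
  have hy: "h y \<noteq> 0" using qv H K unfolding v_def h_def by auto
  have vnz: "v \<noteq> 0" using qv by (auto simp: quad_def)
  have cu: "cramer a b c u = (1 / norm v) *\<^sub>R y" unfolding u_def v_def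
    using cramer_scale cramer_lin[OF B] by simp
  have "T \<noteq> {}" using mu by auto
  hence "u \<in> S" unfolding T_def using connected_component_eq_empty by blast
  hence uT: "u \<in> T" unfolding T_def using connected_component_refl by simp
  have Tsub: "T \<subseteq> S" unfolding T_def by (rule connected_component_subset)
  have cT: "connected T" unfolding T_def by simp
  have hnz: "h (cramer a b c x) \<noteq> 0" if "x \<in> T" for x
  proof -
    have "quad A x \<noteq> 0" using that Tsub unfolding S_def by auto
    moreover have "quad A x = \<kappa> * h (cramer a b c x)" using H[of "cramer a b c x"] lin_cramer[OF B] h_def by simp
    ultimately show ?thesis by simp
  qed
  have hs: "h (r *\<^sub>R w) = r * r * h w" for r w by (simp add: h_def algebra_simps)
  show ?thesis
  proof (rule ccontr)
    assume "\<not> ?thesis"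
    hence hp: "h y > 0" using hy unfolding h_def by auto
    have c1: "continuous_on T (\<lambda>x. h (cramer a b c x))" unfolding h_def
      by (intro continuous_on_mult continuous_on_diff cont_cramer)
    have "h (cramer a b c u) > 0" using cu hp hs vnz by simp
    hence hpos: "h (cramer a b c x) > 0" if "x \<in> T" for x
      using conn_sign[OF cT c1 uT that] hnz by blast
    have f2nz: "(cramer a b c x)$1 \<noteq> 0" if "x \<in> T" for x
    proof
      assume "(cramer a b c x)$1 = 0"
      hence "h (cramer a b c x) \<le> 0" unfolding h_def by simp
      thus False using hpos[OF that] by linarith
    qed
    have c2: "continuous_on T (\<lambda>x. (cramer a b c x)$1)" by (rule cont_cramer)
    have c3: "continuous_on T (\<lambda>x. - (cramer a b c x)$1)" by (intro continuous_on_minus cont_cramer)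
    have y1: "y$1 \<noteq> 0" using hp unfolding h_def by auto
    have nv: "norm v > 0" using vnz by simp
    have e1: "(cramer a b c u)$1 = y$1 / norm v" using cu by simp
    have e2: "(cramer a b c (-u))$1 = - (y$1 / norm v)" using cu cramer_neg by simp
    show False
    proof (cases "y$1 > 0")
      case True
      hence "(cramer a b c u)$1 > 0" using e1 nv by simp
      hence "(cramer a b c (-u))$1 > 0" using conn_sign[OF cT c2 uT mu] f2nz by blast
      moreover have "y$1 / norm v > 0" using True nv by simp
      ultimately show False using e2 by linarith
    next
      case False
      hence "y$1 < 0" using y1 by simp
      hence "- (cramer a b c u)$1 > 0" using e1 nv by (simp add: divide_neg_pos)
      hence "- (cramer a b c (-u))$1 > 0" using conn_sign[OF cT c3 uT mu] f2nz by auto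
      moreover have "y$1 / norm v < 0" using \<open>y$1 < 0\<close> nv by (simp add: divide_neg_pos)
      ultimately show False using e2 by linarith
    qed
  qed
qed




lemma bil_lin9: "bil A (lin a b c y) (lin a b c z) =
     y$1*z$1*bil A a a + y$1*z$2*bil A a b + y$1*z$3*bil A a c +
     y$2*z$1*bil A b a + y$2*z$2*bil A b b + y$2*z$3*bil A b c +
     y$3*z$1*bil A c a + y$3*z$2*bil A c b + y$3*z$3*bil A c c"
  by (simp add: lin_def bil_lin algebra_simps)

lemma quad3:
  assumes "transpose A = A" "quad A a = 0" "quad A b = 0" "quad A c = 0"
  shows "quad A (lin a b c z) = 2 * (z$1*z$2*bil A a b + z$1*z$3*bil A a c + z$2*z$3*bil A b c)"
proof -
  have s: "bil A x y = bil A y x" for x y using bil_sym[OF assms(1)] .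
  show ?thesis using assms(2-4) unfolding quad_bil bil_lin9
    by (simp add: s[of b a] s[of c a] s[of c b] algebra_simps)
qed

lemma pos6_ltr:
  assumes "pos6 (ltr a b c Y)" "br a b c > 0"
  shows "pos6 Y"
proof -
  have e: "br (ltr a b c Y $ i) (ltr a b c Y $ j) (ltr a b c Y $ k) = br a b c * br (Y$i) (Y$j) (Y$k)" for i j k
    by (simp add: ltr_def br_lin)
  have p: "0 < br a b c * br (Y$i) (Y$j) (Y$k) \<Longrightarrow> 0 < br (Y$i) (Y$j) (Y$k)" for i j k
    using pos_of' assms(2) by blast
  show ?thesis using assms(1) unfolding pos6_def e using p by blast
qed

lemma normalize:
  fixes Q :: config
  assumes P: "pos6 Q" and As: "transpose A = A" and Anz: "A \<noteq> 0"
    and Z: "\<forall>l\<in>{1,2,3,4,5}. quad A (Q$l) = 0" and O: "outside_conic A (Q$0)"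
  shows "\<exists>a b c m1 m2 m3 m4 m5 t5 t1 w0 x D. br a b c > 0 \<and> region m1 m2 m3 m4 m5 t5 t1 w0 x D \<and>
           Q = ltr a b c (canon m1 m2 m3 m4 m5 t5 t1 w0 x D)"
proof -
  define q1 where "q1 = Q$1"
  define q2 where "q2 = Q$2"
  define q3 where "q3 = Q$3"
  define q4 where "q4 = Q$4"
  define q5 where "q5 = Q$5"
  have p: "br q1 q2 q3 > 0" "br q1 q2 q4 > 0" "br q1 q2 q5 > 0" "br q1 q3 q4 > 0" "br q1 q3 q5 > 0"
    "br q1 q4 q5 > 0" "br q2 q3 q4 > 0" "br q2 q3 q5 > 0" "br q2 q4 q5 > 0" "br q3 q4 q5 > 0"
    using P unfolding pos6_def q1_def q2_def q3_def q4_def q5_def by auto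
  have z: "quad A q1 = 0" "quad A q2 = 0" "quad A q3 = 0" "quad A q4 = 0" "quad A q5 = 0"
    using Z unfolding q1_def q2_def q3_def q4_def q5_def by auto
  have bs: "bil A x y = bil A y x" for x y using bil_sym[OF As] .
  define B23 where "B23 = bil A q2 q3"
  define B24 where "B24 = bil A q2 q4"
  define B34 where "B34 = bil A q3 q4"
  have qL: "quad A (lin q2 q3 q4 v) = 2 * (v$1* v$2*B23 + v$1* v$3*B24 + v$2* v$3*B34)" for v
    using quad3[OF As z(2) z(3) z(4)] unfolding B23_def B24_def B34_def .
  define D where "D = br q2 q3 q4"
  have Dp: "D > 0" using p unfolding D_def by simp
  define u where "u = cramer q2 q3 q4 q1"
  define w where "w = cramer q2 q3 q4 q5"
  have q1u: "q1 = lin q2 q3 q4 u" unfolding u_def using lin_cramer Dp D_def by simp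
  have q5w: "q5 = lin q2 q3 q4 w" unfolding w_def using lin_cramer Dp D_def by simp
  have E1: "u$1*u$2*B23 + u$1*u$3*B24 + u$2*u$3*B34 = 0" using z(1) qL[of u] q1u by simp
  have E5: "w$1*w$2*B23 + w$1*w$3*B24 + w$2*w$3*B34 = 0" using z(5) qL[of w] q5w by simp
  have u1: "u$1 \<noteq> 0" using p Dp by (simp add: u_def cramer_def D_def)
  have u2: "u$2 \<noteq> 0" using p Dp br_nz_perm(1)[of q1 q2 q4] by (simp add: u_def cramer_def D_def)
  have u3: "u$3 \<noteq> 0" using p Dp br_cyc[of q2 q3 q1] by (simp add: u_def cramer_def D_def)
  have w1: "w$1 \<noteq> 0" using p Dp br_cyc[of q3 q4 q5] by (simp add: w_def cramer_def D_def)
  have w2: "w$2 \<noteq> 0" using p Dp br_nz_perm(2)[of q2 q4 q5] by (simp add: w_def cramer_def D_def)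
  have w3: "w$3 \<noteq> 0" using p Dp by (simp add: w_def cramer_def D_def)
  have X: "br q1 q5 (lin q2 q3 q4 v) = D * br u w v" for v
    unfolding D_def by (subst q1u, subst q5w) (rule br_lin)
  have le1: "lin q2 q3 q4 e1 = q2" "lin q2 q3 q4 e2 = q3" "lin q2 q3 q4 e3 = q4"
    by (simp_all add: lin_def e1_def e2_def e3_def)
  have x3: "u$1*w$2 - u$2*w$1 \<noteq> 0"
  proof -
    have "br q1 q5 q4 = D * (u$1*w$2 - u$2*w$1)" using X[of e3] le1 by (simp add: br_def e3_def)
    moreover have "br q1 q5 q4 \<noteq> 0" using br_nz_perm(2)[of q1 q4 q5] p by simp
    ultimately show ?thesis by simp
  qed
  have x2: "u$1*w$3 - u$3*w$1 \<noteq> 0"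
  proof -
    have "br q1 q5 q3 = D * (u$3*w$1 - u$1*w$3)" using X[of e2] le1 by (simp add: br_def e2_def)
    moreover have "br q1 q5 q3 \<noteq> 0" using br_nz_perm(2)[of q1 q3 q5] p by simp
    ultimately show ?thesis by auto
  qed
  have x1: "u$2*w$3 - u$3*w$2 \<noteq> 0"
  proof -
    have "br q1 q5 q2 = D * (u$2*w$3 - u$3*w$2)" using X[of e1] le1 by (simp add: br_def e1_def)
    moreover have "br q1 q5 q2 \<noteq> 0" using br_nz_perm(2)[of q1 q2 q5] p by simp
    ultimately show ?thesis by auto
  qed
  have allz: False if "B23 = 0" "B24 = 0" "B34 = 0"
  proof -
    have "Atr A q2 q3 q4 = 0"
      using that z unfolding Atr_def B23_def B24_def B34_def
      by (simp add: vec_eq_iff forall_3 quad_bil bs[of q3 q2] bs[of q4 q2] bs[of q4 q3])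
    hence "A = 0" using Atr_zero[of q2 q3 q4 A] Dp D_def by simp
    thus False using Anz by simp
  qed
  have B23nz: "B23 \<noteq> 0"
  proof
    assume h: "B23 = 0"
    have "u$3 * (u$1*B24 + u$2*B34) = 0" using E1 h by (simp add: algebra_simps)
    hence a: "u$1*B24 + u$2*B34 = 0" using u3 by simp
    have "w$3 * (w$1*B24 + w$2*B34) = 0" using E5 h by (simp add: algebra_simps)
    hence b: "w$1*B24 + w$2*B34 = 0" using w3 by simp
    have "B24*(u$1*w$2 - u$2*w$1) = w$2*(u$1*B24 + u$2*B34) - u$2*(w$1*B24 + w$2*B34)" by (simp add: algebra_simps)
    hence "B24 = 0" using a b x3 by simp
    moreover have "B34*(u$1*w$2 - u$2*w$1) = u$1*(w$1*B24 + w$2*B34) - w$1*(u$1*B24 + u$2*B34)" by (simp add: algebra_simps)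
    hence "B34 = 0" using a b x3 by simp
    ultimately show False using allz h by blast
  qed
  have B24nz: "B24 \<noteq> 0"
  proof
    assume h: "B24 = 0"
    have "u$2 * (u$1*B23 + u$3*B34) = 0" using E1 h by (simp add: algebra_simps)
    hence a: "u$1*B23 + u$3*B34 = 0" using u2 by simp
    have "w$2 * (w$1*B23 + w$3*B34) = 0" using E5 h by (simp add: algebra_simps)
    hence b: "w$1*B23 + w$3*B34 = 0" using w2 by simp
    have "B23*(u$1*w$3 - u$3*w$1) = w$3*(u$1*B23 + u$3*B34) - u$3*(w$1*B23 + w$3*B34)" by (simp add: algebra_simps)
    hence "B23 = 0" using a b x2 by simp
    thus False using B23nz by simp
  qed
  have B34nz: "B34 \<noteq> 0"
  proof
    assume h: "B34 = 0"
    have "u$1 * (u$2*B23 + u$3*B24) = 0" using E1 h by (simp add: algebra_simps)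
    hence a: "u$2*B23 + u$3*B24 = 0" using u1 by simp
    have "w$1 * (w$2*B23 + w$3*B24) = 0" using E5 h by (simp add: algebra_simps)
    hence b: "w$2*B23 + w$3*B24 = 0" using w1 by simp
    have "B23*(u$2*w$3 - u$3*w$2) = w$3*(u$2*B23 + u$3*B24) - u$3*(w$2*B23 + w$3*B24)" by (simp add: algebra_simps)
    hence "B23 = 0" using a b x1 by simp
    thus False using B23nz by simp
  qed
  define \<alpha> where "\<alpha> = B24 / B23"
  define \<gamma> where "\<gamma> = B34 / B23"
  define K where "K = B24 * B34 / B23"
  define \<sigma> where "\<sigma> = (if \<alpha> * \<gamma> > 0 then 1 else -1::real)"
  have ag: "\<alpha> \<noteq> 0" "\<gamma> \<noteq> 0" "K \<noteq> 0" using B23nz B24nz B34nz by (simp_all add: \<alpha>_def \<gamma>_def K_def)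
  have ss: "\<sigma> * \<sigma> = 1" by (simp add: \<sigma>_def)
  have sag: "\<sigma> * (\<alpha> * \<gamma>) > 0" using ag unfolding \<sigma>_def
    by (cases "\<alpha> * \<gamma> > 0") (auto simp: mult_less_0_iff not_less le_less)
  have snz: "\<sigma> \<noteq> 0" by (simp add: \<sigma>_def)
  define a where "a = (\<sigma> * \<alpha>) *\<^sub>R q3"
  define b where "b = \<sigma> *\<^sub>R (q4 - \<alpha> *\<^sub>R q3 - \<gamma> *\<^sub>R q2)"
  define c where "c = (\<sigma> * \<gamma>) *\<^sub>R q2"
  have bq: "br q3 (q4 - \<alpha> *\<^sub>R q3 - \<gamma> *\<^sub>R q2) q2 = br q3 q4 q2" by (simp add: br_diff2 br_scale2)
  have "br a b c = (\<sigma> * \<alpha>) * (\<sigma> * ((\<sigma> * \<gamma>) * br q3 (q4 - \<alpha> *\<^sub>R q3 - \<gamma> *\<^sub>R q2) q2))"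
    unfolding a_def b_def c_def by (simp only: br_scale1 br_scale2 br_scale3 mult_ac)
  also have "\<dots> = \<sigma> * \<sigma> * \<sigma> * \<alpha> * \<gamma> * br q3 q4 q2" unfolding bq by (simp add: algebra_simps)
  also have "\<dots> = (\<sigma> * (\<alpha> * \<gamma>)) * D" using ss br_cyc[of q3 q4 q2] unfolding D_def
    by (simp add: algebra_simps)
  finally have babc: "br a b c > 0" using sag Dp by simp
  have Lq: "lin a b c y = lin q3 q4 q2 (\<sigma> *\<^sub>R vector [(y$1 - y$2)*\<alpha>, y$2, (y$3 - y$2)*\<gamma>])" for y
    by (simp add: lin_def a_def b_def c_def algebra_simps)
  have qL2: "quad A (lin q3 q4 q2 v) = 2 * (v$1* v$2*B34 + v$1* v$3*B23 + v$2* v$3*B24)" for v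
    using quad3[OF As z(3) z(4) z(2)] bs[of q3 q2] bs[of q4 q2] unfolding B23_def B24_def B34_def by simp
  have H: "quad A (lin a b c y) = (2*K) * (y$1*y$3 - y$2*y$2)" for y
  proof -
    have "quad A (lin a b c y) = 2 * (\<sigma>*\<sigma>) * ((y$1 - y$2)*\<alpha>*y$2*B34 + (y$1 - y$2)*\<alpha>*(y$3 - y$2)*\<gamma>*B23
            + y$2*(y$3 - y$2)*\<gamma>*B24)"
      unfolding Lq qL2 by (simp add: algebra_simps)
    also have "\<dots> = (2*K) * (y$1*y$3 - y$2*y$2)" using ss B23nz unfolding \<alpha>_def \<gamma>_def K_def
      by (simp add: field_simps)
    finally show ?thesis .
  qed
  define Y where "Y = (\<chi> l. cramer a b c (Q$l))"
  have babc0: "br a b c \<noteq> 0" using babc by simp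
  have QY: "Q = ltr a b c Y" unfolding Y_def ltr_def using lin_cramer[OF babc0] by (simp add: vec_eq_iff)
  have QYl: "Q$l = lin a b c (Y$l)" for l using QY by (simp add: ltr_def)
  have "pos6 (ltr a b c Y)" using P QY by simp
  hence PY: "pos6 Y" using pos6_ltr[of a b c Y] babc by blast
  have Y3: "Y$3 = (1 / (\<sigma> * \<alpha>)) *\<^sub>R e1"
  proof -
    have "lin a b c ((1 / (\<sigma> * \<alpha>)) *\<^sub>R e1) = q3" using ag snz by (simp add: lin_def e1_def a_def)
    hence "cramer a b c (lin a b c ((1 / (\<sigma> * \<alpha>)) *\<^sub>R e1)) = cramer a b c q3" by simp
    thus ?thesis unfolding Y_def q3_def using cramer_lin[OF babc0] by simp
  qed
  have Y2: "Y$2 = (1 / (\<sigma> * \<gamma>)) *\<^sub>R e3"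
  proof -
    have "lin a b c ((1 / (\<sigma> * \<gamma>)) *\<^sub>R e3) = q2" using ag snz by (simp add: lin_def e3_def c_def)
    hence "cramer a b c (lin a b c ((1 / (\<sigma> * \<gamma>)) *\<^sub>R e3)) = cramer a b c q2" by simp
    thus ?thesis unfolding Y_def q2_def using cramer_lin[OF babc0] by simp
  qed
  have Y4: "Y$4 = (1 / \<sigma>) *\<^sub>R vt 1"
  proof -
    have "lin a b c ((1 / \<sigma>) *\<^sub>R vt 1) = q4" using ag snz
      by (simp add: lin_def vt_def a_def b_def c_def algebra_simps)
    hence "cramer a b c (lin a b c ((1 / \<sigma>) *\<^sub>R vt 1)) = cramer a b c q4" by simp
    thus ?thesis unfolding Y_def q4_def using cramer_lin[OF babc0] by simp
  qed
  have C1: "(Y$1)$2 * (Y$1)$2 = (Y$1)$1 * (Y$1)$3"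
  proof -
    have "(2*K) * ((Y$1)$1*(Y$1)$3 - (Y$1)$2*(Y$1)$2) = 0" using H[of "Y$1"] QYl[of 1] z(1) q1_def by simp
    thus ?thesis using ag by simp
  qed
  have C5: "(Y$5)$2 * (Y$5)$2 = (Y$5)$1 * (Y$5)$3"
  proof -
    have "(2*K) * ((Y$5)$1*(Y$5)$3 - (Y$5)$2*(Y$5)$2) = 0" using H[of "Y$5"] QYl[of 5] z(5) q5_def by simp
    thus ?thesis using ag by simp
  qed
  have W: "(Y$0)$2 * (Y$0)$2 - (Y$0)$1 * (Y$0)$3 > 0"
    using outside_transfer[OF babc0 _ H] O QYl[of 0] ag by simp
  obtain m1 m2 m3 m4 m5 t5 t1 w0 x D' where R: "region m1 m2 m3 m4 m5 t5 t1 w0 x D'"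
      and YC: "Y = canon m1 m2 m3 m4 m5 t5 t1 w0 x D'"
    using recog[OF PY Y3 Y2 Y4 C1 C5 W] by blast
  show ?thesis using babc R QY YC by blast
qed

lemma endpoint:
  fixes Q :: config
  assumes "pos6 Q" "transpose A = A" "A \<noteq> 0"
    "\<forall>l\<in>{1,2,3,4,5}. quad A (Q$l) = 0" "outside_conic A (Q$0)"
  shows "\<exists>m1 m2 m3 m4 m5 t5 t1 w0 x D \<Gamma>. region m1 m2 m3 m4 m5 t5 t1 w0 x D \<and>
     continuous_on {0..1} (\<Gamma>::real \<Rightarrow> config) \<and> \<Gamma> 0 = Q \<and> \<Gamma> 1 = canon m1 m2 m3 m4 m5 t5 t1 w0 x D \<and>
     (\<forall>s\<in>{0..1}. typical_config (\<Gamma> s))"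
proof -
  obtain a b c m1 m2 m3 m4 m5 t5 t1 w0 x D where h: "br a b c > 0" "region m1 m2 m3 m4 m5 t5 t1 w0 x D"
     "Q = ltr a b c (canon m1 m2 m3 m4 m5 t5 t1 w0 x D)"
    using normalize[OF assms] by blast
  obtain \<Gamma> :: "real \<Rightarrow> config" where G: "continuous_on {0..1} \<Gamma>"
     "\<Gamma> 0 = ltr a b c (canon m1 m2 m3 m4 m5 t5 t1 w0 x D)" "\<Gamma> 1 = canon m1 m2 m3 m4 m5 t5 t1 w0 x D"
     "\<forall>s\<in>{0..1}. typical_config (\<Gamma> s)"
    using gl_config_path[OF h(1) canon_typical[OF h(2)]] by blast
  have "\<Gamma> 0 = Q" using G(2) h(3) by simp
  thus ?thesis using h(2) G by blast
qed




lemma outside_scale: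
  assumes "outside_conic A v" "c \<noteq> 0"
  shows "outside_conic A (c *\<^sub>R v)"
proof -
  define S where "S = sphere (0::real^3) 1 - {w. quad A w = 0}"
  define u where "u = (1 / norm v) *\<^sub>R v"
  have q: "quad A v \<noteq> 0" and m: "- u \<in> connected_component_set S u"
    using assms(1) unfolding outside_conic_def Let_def S_def u_def by auto
  have qc: "quad A (c *\<^sub>R v) = c * c * quad A v" by (simp add: quad_def matrix_vector_mult_scaleR)
  have vnz: "v \<noteq> 0" using q by (auto simp: quad_def)
  show ?thesis
  proof (cases "c > 0")
    case True
    have "(1 / norm (c *\<^sub>R v)) *\<^sub>R (c *\<^sub>R v) = u" using True unfolding u_def by simp
    then show ?thesis unfolding outside_conic_def Let_def using qc q assms(2) m S_def by simp
  next
    case False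
    hence cn: "c < 0" using assms(2) by simp
    have e: "(1 / norm (c *\<^sub>R v)) *\<^sub>R (c *\<^sub>R v) = - u" using cn vnz unfolding u_def
      by (simp add: vec_eq_iff abs_if)
    have "connected_component S (- u) u" using m connected_component_sym by (simp add: mem_Collect_eq)
    hence "- (- u) \<in> connected_component_set S (- u)" by simp
    then show ?thesis unfolding outside_conic_def Let_def e using qc q assms(2) S_def by simp
  qed
qed

lemma hull3_mem:
  assumes "br q x z > 0" "br x y z < 0" "br q y z > 0" "br q x y > 0"
    and "a \<bullet> q = 1" "a \<bullet> x = 1" "a \<bullet> y = 1" "a \<bullet> z = 1"
  shows "y \<in> convex hull {q, x, z}"
proof -
  define d where "d = br q x z"
  have cid: "d *\<^sub>R y = br y x z *\<^sub>R q + br q y z *\<^sub>R x + br q x y *\<^sub>R z"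
    unfolding d_def by (rule cramer_id)
  have "a \<bullet> (d *\<^sub>R y) = br y x z + br q y z + br q x y"
    unfolding cid using assms(5-8) by (simp add: inner_add_right)
  hence sd: "br y x z + br q y z + br q x y = d" using assms(7) by simp
  have dp: "d > 0" using assms(1) d_def by simp
  have byx: "br y x z = - br x y z" by (rule br_swap12)
  have "y = (br y x z / d) *\<^sub>R q + (br q y z / d) *\<^sub>R x + (br q x y / d) *\<^sub>R z"
  proof -
    have "y = (1/d) *\<^sub>R (d *\<^sub>R y)" using dp by simp
    also have "\<dots> = (br y x z / d) *\<^sub>R q + (br q y z / d) *\<^sub>R x + (br q x y / d) *\<^sub>R z"
      unfolding cid by (simp add: scaleR_add_right divide_inverse_commute)
    finally show ?thesis .
  qed
  moreover have "br y x z / d \<ge> 0" "br q y z / d \<ge> 0" "br q x y / d \<ge> 0"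
    using dp assms(2-4) byx by (simp_all add: divide_nonpos_pos less_imp_le)
  moreover have "br y x z / d + br q y z / d + br q x y / d = 1" using sd dp by (simp add: add_divide_distrib[symmetric])
  ultimately show ?thesis unfolding convex_hull_3 by blast
qed

lemma extract_cfg:
  fixes P :: config and i0 :: 6
  assumes T: "typical_config P" and Cy: "cyclic_config P" and Dm: "dominant P i0"
  shows "\<exists>Q A. pos6 Q \<and> config_points Q = config_points P \<and> proj_class (Q$0) = proj_class (P$i0) \<and>
     transpose A = A \<and> A \<noteq> 0 \<and> (\<forall>l\<in>{1,2,3,4,5}. quad A (Q$l) = 0) \<and> outside_conic A (Q$0)"
proof -
  obtain A where A: "transpose A = A" "A \<noteq> 0" "\<forall>j. j \<noteq> i0 \<longrightarrow> quad A (P$j) = 0" "outside_conic A (P$i0)"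
    using Dm unfolding dominant_def by blast
  obtain a where a1: "\<forall>i. a \<bullet> (P$i) \<noteq> 0"
     and a2: "\<forall>i. (\<lambda>i. (1 / (a \<bullet> (P$i))) *\<^sub>R (P$i)) i \<notin> convex hull ((\<lambda>i. (1 / (a \<bullet> (P$i))) *\<^sub>R (P$i)) ` (UNIV - {i}))"
    using Cy unfolding cyclic_config_def Let_def by blast
  define cf where "cf i = 1 / (a \<bullet> (P$i))" for i
  define f where "f i = cf i *\<^sub>R (P$i)" for i
  have fnc: "f i \<notin> convex hull (f ` (UNIV - {i}))" for i using a2 unfolding f_def cf_def by blast
  have cfnz: "cf i \<noteq> 0" for i using a1 cf_def by simp
  have af: "a \<bullet> f i = 1" for i using a1 unfolding f_def cf_def by simp
  have fbr: "br (f i) (f j) (f k) \<noteq> 0" if "i \<noteq> j" "j \<noteq> k" "i \<noteq> k" for i j k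
    using typical_br[OF T that] cfnz by (simp add: f_def br_scale1 br_scale2 br_scale3)
  define q where "q = f i0"
  define U where "U = UNIV - {i0}"
  have cl: "closed (convex hull (f ` U))"
    by (intro compact_imp_closed compact_convex_hull finite_imp_compact finite_imageI) simp
  obtain g \<beta> where sep: "g \<bullet> q < \<beta>" "\<forall>x\<in>convex hull (f ` U). g \<bullet> x > \<beta>"
    using separating_hyperplane_closed_point[OF convex_convex_hull cl] fnc[of i0] unfolding q_def U_def by blast
  define g2 where "g2 = g - (g \<bullet> q) *\<^sub>R a"
  have h0: "g2 \<bullet> q = 0" using af[of i0] unfolding g2_def q_def by (simp add: inner_diff_left)
  have hp: "g2 \<bullet> f j > 0" if "j \<in> U" for j
  proof -
    have "f j \<in> convex hull (f ` U)" using that by (meson hull_subset image_eqI subsetD)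
    hence "g \<bullet> f j > \<beta>" using sep by blast
    moreover have "g2 \<bullet> f j = g \<bullet> f j - g \<bullet> q" using af[of j] by (simp add: g2_def inner_diff_left)
    ultimately show ?thesis using sep by simp
  qed
  define rel where "rel j k \<longleftrightarrow> br q (f j) (f k) > 0" for j k
  have trans: "rel j m" if "j \<in> U" "k \<in> U" "m \<in> U" "rel j k" "rel k m" for j k m
  proof -
    have i: "br (f k) (f m) q * (g2 \<bullet> f j) - br (f j) (f m) q * (g2 \<bullet> f k) + br (f j) (f k) q * (g2 \<bullet> f m)
             - br (f j) (f k) (f m) * (g2 \<bullet> q) = 0" by (rule id4)
    have c1: "br (f k) (f m) q = br q (f k) (f m)" by (rule br_cyc)
    have c2: "br (f j) (f k) q = br q (f j) (f k)" by (rule br_cyc)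
    have c3: "br (f j) (f m) q = br q (f j) (f m)" by (rule br_cyc)
    have "br q (f j) (f m) * (g2 \<bullet> f k) = br q (f k) (f m) * (g2 \<bullet> f j) + br q (f j) (f k) * (g2 \<bullet> f m)"
      using i h0 c1 c2 c3 by simp
    moreover have "br q (f k) (f m) * (g2 \<bullet> f j) > 0" using that(5) hp[OF that(1)] rel_def by simp
    moreover have "br q (f j) (f k) * (g2 \<bullet> f m) > 0" using that(4) hp[OF that(3)] rel_def by simp
    ultimately have "br q (f j) (f m) * (g2 \<bullet> f k) > 0" by simp
    thus ?thesis unfolding rel_def using hp[OF that(2)] by (simp add: zero_less_mult_iff)
  qed
  have irr: "\<not> rel j j" for j unfolding rel_def by simp
  have total: "rel j k \<or> rel k j" if "j \<in> U" "k \<in> U" "j \<noteq> k" for j k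
  proof -
    have "br q (f j) (f k) \<noteq> 0" using fbr[of i0 j k] that unfolding q_def U_def by auto
    moreover have "br q (f k) (f j) = - br q (f j) (f k)" by (rule br_swap23)
    ultimately show ?thesis unfolding rel_def by linarith
  qed
  define r where "r j = card {k \<in> U. rel k j}" for j
  have mono: "r j < r k" if "j \<in> U" "k \<in> U" "rel j k" for j k
  proof -
    have "{x \<in> U. rel x j} \<subset> {x \<in> U. rel x k}"
    proof
      show "{x \<in> U. rel x j} \<subseteq> {x \<in> U. rel x k}" using trans that by blast
      show "{x \<in> U. rel x j} \<noteq> {x \<in> U. rel x k}" using that irr by blast
    qed
    thus ?thesis unfolding r_def by (intro psubset_card_mono) auto
  qed
  have cU: "card U = 5" unfolding U_def by (simp add: card_Diff_singleton)
  have bnd: "r j < 5" if "j \<in> U" for j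
  proof -
    have "{k \<in> U. rel k j} \<subseteq> U - {j}" using irr by blast
    hence "r j \<le> card (U - {j})" unfolding r_def by (intro card_mono) auto
    also have "\<dots> = 4" using cU that by (simp add: card_Diff_singleton)
    finally show ?thesis by simp
  qed
  have inj: "inj_on r U"
  proof (rule inj_onI)
    fix j k assume "j \<in> U" "k \<in> U" "r j = r k"
    thus "j = k" using total mono by (metis less_irrefl)
  qed
  have img: "r ` U = {0..<5}"
  proof -
    have "r ` U \<subseteq> {0..<5}" using bnd by auto
    moreover have "card (r ` U) = card {0..<(5::nat)}" using card_image[OF inj] cU by simp
    ultimately show ?thesis by (intro card_subset_eq) auto
  qed
  have ex: "\<exists>j\<in>U. r j = n" if "n < 5" for n using img that by (metis atLeastLessThan_iff imageE zero_le)
  obtain j0 where J0: "j0 \<in> U" "r j0 = 0" using ex[of 0] by auto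
  obtain j1 where J1: "j1 \<in> U" "r j1 = 1" using ex[of 1] by auto
  obtain j2 where J2: "j2 \<in> U" "r j2 = 2" using ex[of 2] by auto
  obtain j3 where J3: "j3 \<in> U" "r j3 = 3" using ex[of 3] by auto
  obtain j4 where J4: "j4 \<in> U" "r j4 = 4" using ex[of 4] by auto
  have ord: "rel j k" if "j \<in> U" "k \<in> U" "r j < r k" for j k
    using total[OF that(1,2)] mono[OF that(2,1)] that(3) by (metis less_asym less_irrefl)
  have tri: "br (f j) (f k) (f m) > 0" if "j \<in> U" "k \<in> U" "m \<in> U" "r j < r k" "r k < r m" for j k m
  proof (rule ccontr)
    assume nt: "\<not> ?thesis"
    have jk: "j \<noteq> k" "k \<noteq> m" "j \<noteq> m" using that by auto
    have "br (f j) (f k) (f m) \<noteq> 0" using fbr jk by blast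
    hence neg: "br (f j) (f k) (f m) < 0" using nt by linarith
    have "f k \<in> convex hull {q, f j, f m}"
      using hull3_mem[of q "f j" "f m" "f k" a] neg ord that af unfolding rel_def q_def
      by (metis less_trans)
    moreover have "{q, f j, f m} \<subseteq> f ` (UNIV - {k})" using jk that(2) unfolding q_def U_def by auto
    ultimately have "f k \<in> convex hull (f ` (UNIV - {k}))" by (meson hull_mono subsetD)
    thus False using fnc by blast
  qed
  have pr: "br (f j) (f k) q > 0" if "j \<in> U" "k \<in> U" "r j < r k" for j k
    using ord[OF that] unfolding rel_def by (simp add: br_cyc)
  define Q :: config where "Q = (\<chi> l. if l = 1 then f j0 else if l = 2 then f j1 else if l = 3 then f j2
        else if l = 4 then f j3 else if l = 5 then f j4 else q)"
  have Qn: "Q$1 = f j0" "Q$2 = f j1" "Q$3 = f j2" "Q$4 = f j3" "Q$5 = f j4" "Q$0 = q"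
    by (simp_all add: Q_def)
  have P6: "pos6 Q" unfolding pos6_def Qn
    using tri pr J0 J1 J2 J3 J4 by simp
  have dist: "distinct [i0, j0, j1, j2, j3, j4]" using J0 J1 J2 J3 J4 unfolding U_def by auto
  have allj: "set [i0, j0, j1, j2, j3, j4] = UNIV"
  proof -
    have "card (set [i0, j0, j1, j2, j3, j4]) = 6" using distinct_card[OF dist] by simp
    thus ?thesis by (intro card_subset_eq) auto
  qed
  have rQ: "range (($) Q) = f ` set [i0, j0, j1, j2, j3, j4]"
  proof -
    have "range (($) Q) = ($) Q ` {0,1,2,3,4,5}" using univ6 by simp
    also have "\<dots> = f ` set [i0, j0, j1, j2, j3, j4]" by (simp add: Qn q_def insert_commute)
    finally show ?thesis .
  qed
  have pf: "proj_class (f i) = proj_class (P$i)" for i using pc_scale cfnz f_def by simp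
  have CP: "config_points Q = config_points P"
  proof -
    have "config_points Q = proj_class ` f ` UNIV" unfolding config_points_def rQ allj ..
    also have "\<dots> = proj_class ` range (($) P)" using pf by (simp add: image_image)
    finally show ?thesis unfolding config_points_def by simp
  qed
  have q0: "proj_class (Q$0) = proj_class (P$i0)" using pf Qn q_def by simp
  have qz: "quad A (f j) = 0" if "j \<in> U" for j
    using A(3) that unfolding U_def f_def by (simp add: quad_def matrix_vector_mult_scaleR)
  have Z: "\<forall>l\<in>{1,2,3,4,5}. quad A (Q$l) = 0" using qz J0 J1 J2 J3 J4 Qn by auto
  have O: "outside_conic A (Q$0)" using outside_scale[OF A(4) cfnz[of i0]] Qn q_def f_def by simp
  show ?thesis using P6 CP q0 A(1,2) Z O by blast
qed




lemma join_all:
  assumes "\<forall>s\<in>{0..1}. T (g1 s)" "\<forall>s\<in>{0..1}. T (g2 s)"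
  shows "\<forall>s\<in>{0..1::real}. T ((g1 +++ g2) s)"
  using assms by (auto simp: joinpaths_def)

lemma rev_all:
  assumes "\<forall>s\<in>{0..1}. T (g s)"
  shows "\<forall>s\<in>{0..1::real}. T (reversepath g s)"
  using assms by (auto simp: reversepath_def)

theorem lemma2p2:
  fixes P0 P1 :: config and i0 i1 :: 6
  assumes "typical_config P0" and "cyclic_config P0"
    and "typical_config P1" and "cyclic_config P1"
    and "dominant P0 i0" and "dominant P1 i1"
  shows "\<exists>\<gamma> :: real \<Rightarrow> config.
           continuous_on {0..1} \<gamma> \<and>
           (\<forall>t\<in>{0..1}. typical_config (\<gamma> t)) \<and>
           config_points (\<gamma> 0) = config_points P0 \<and>
           config_points (\<gamma> 1) = config_points P1 \<and>
           (\<exists>k. proj_class (\<gamma> 0 $ k) = proj_class (P0 $ i0) \<and>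
                proj_class (\<gamma> 1 $ k) = proj_class (P1 $ i1))"
proof -
  obtain Q0 A0 where E0: "pos6 Q0" "config_points Q0 = config_points P0" "proj_class (Q0$0) = proj_class (P0$i0)"
     "transpose A0 = A0" "A0 \<noteq> 0" "\<forall>l\<in>{1,2,3,4,5}. quad A0 (Q0$l) = 0" "outside_conic A0 (Q0$0)"
    using extract_cfg[OF assms(1,2,5)] by blast
  obtain Q1 A1 where E1: "pos6 Q1" "config_points Q1 = config_points P1" "proj_class (Q1$0) = proj_class (P1$i1)"
     "transpose A1 = A1" "A1 \<noteq> 0" "\<forall>l\<in>{1,2,3,4,5}. quad A1 (Q1$l) = 0" "outside_conic A1 (Q1$0)"
    using extract_cfg[OF assms(3,4,6)] by blast
  obtain m1 m2 m3 m4 m5 t5 t1 w0 x D \<Gamma>0 where G0: "region m1 m2 m3 m4 m5 t5 t1 w0 x D"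
     "continuous_on {0..1} (\<Gamma>0::real \<Rightarrow> config)" "\<Gamma>0 0 = Q0" "\<Gamma>0 1 = canon m1 m2 m3 m4 m5 t5 t1 w0 x D"
     "\<forall>s\<in>{0..1}. typical_config (\<Gamma>0 s)"
    using endpoint[OF E0(1,4,5,6,7)] by blast
  obtain n1 n2 n3 n4 n5 u5 u1 v0 y E \<Gamma>1 where G1: "region n1 n2 n3 n4 n5 u5 u1 v0 y E"
     "continuous_on {0..1} (\<Gamma>1::real \<Rightarrow> config)" "\<Gamma>1 0 = Q1" "\<Gamma>1 1 = canon n1 n2 n3 n4 n5 u5 u1 v0 y E"
     "\<forall>s\<in>{0..1}. typical_config (\<Gamma>1 s)"
    using endpoint[OF E1(1,4,5,6,7)] by blast
  obtain \<Gamma>m :: "real \<Rightarrow> config" where GM: "continuous_on {0..1} \<Gamma>m"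
     "\<Gamma>m 0 = canon m1 m2 m3 m4 m5 t5 t1 w0 x D" "\<Gamma>m 1 = canon n1 n2 n3 n4 n5 u5 u1 v0 y E"
     "\<forall>s\<in>{0..1}. typical_config (\<Gamma>m s)"
    using canon_path[OF G0(1) G1(1)] by blast
  define \<gamma> where "\<gamma> = \<Gamma>0 +++ (\<Gamma>m +++ reversepath \<Gamma>1)"
  have p0: "path \<Gamma>0" "path \<Gamma>m" "path \<Gamma>1" using G0(2) GM(1) G1(2) unfolding path_def by auto
  have pj: "path (\<Gamma>m +++ reversepath \<Gamma>1)"
    using p0 GM(3) G1(4) by (intro path_join_imp) (simp_all only: path_reversepath, simp_all add: pathstart_def pathfinish_def reversepath_def)
  have fs: "pathfinish \<Gamma>0 = pathstart (\<Gamma>m +++ reversepath \<Gamma>1)"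
    using G0(4) GM(2) by (simp add: pathstart_def pathfinish_def joinpaths_def)
  have "path \<gamma>" unfolding \<gamma>_def by (rule path_join_imp[OF p0(1) pj fs])
  hence c: "continuous_on {0..1} \<gamma>" unfolding path_def .
  have t: "\<forall>s\<in>{0..1}. typical_config (\<gamma> s)" unfolding \<gamma>_def
    by (intro join_all rev_all G0(5) GM(4) G1(5))
  have s0: "\<gamma> 0 = Q0" using G0(3) by (simp add: \<gamma>_def joinpaths_def)
  have s1: "\<gamma> 1 = Q1" using G1(3) by (simp add: \<gamma>_def joinpaths_def reversepath_def)
  show ?thesis
    by (rule exI[of _ \<gamma>]) (use c t s0 s1 E0(2,3) E1(2,3) in auto)
qed



end
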